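(* Let $n\ge2$ and $f=(x_2-xx_1)^2\in\mathbb{C}\{x,x_1,\dots,x_n\}$, and let $E_0$ be the equation $\partial\alpha/\partial x=1/f$. Then $E_0\in Fr(f)$ and $Fr(f)/Sp(f)=\mathbb{C}\{x_3,\dots,x_n\}\,E_0$, i.e. the map $c\mapsto[\partial\alpha/\partial x=c/f]+Sp(f)$ is an isomorphism of complex vector spaces from $\mathbb{C}\{x_3,\dots,x_n\}$ (which is $\mathbb{C}$ when $n=2$) onto $Fr(f)/Sp(f)$.
   Context: Coordinates $(x,x_1,\dots,x_n)$ on $\mathbb{C}^{n+1}$. Here $f=f_1^2$ with $f_1=x_2-xx_1$ irreducible and $\{f_1=0\}$ not a union of orbits of $\partial/\partial x$. A homological equation $\partial\alpha/\partial x=A/f$ with $A\in\mathbb{C}\{x,x_1,\dots,x_n\}$ is special if it has a solution $\beta/(x_2-xx_1)$ with $\beta\in\mathbb{C}\{x,x_1,\dots,x_n\}$; it is free of residues if for every $P=(x^0,x_1^0,\dots,x_n^0)$ near $0$ with $f(P)=0$ and $f(x,x_1^0,\dots,x_n^0)\not\equiv0$, the form $(A/f)(x,x_1^0,\dots,x_n^0)\,dx$ has zero residue at $x^0$. $Fr(f)$ is the vector space of free of residues such equations (identified with their right-hand sides $A$) and $Sp(f)$ the subspace of special ones. *)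

theory Defs
  imports "HOL-Complex_Analysis.Complex_Analysis"
begin

text \<open>Points of C^(n+1) are functions z :: nat => complex; the coordinate x is z 0
  and x_i is z i (1 <= i <= n); coordinates beyond n are ignored.\<close>

definition multi_idx :: "nat \<Rightarrow> (nat \<Rightarrow> nat) set" where
  "multi_idx n = {\<alpha>. \<forall>i>n. \<alpha> i = 0}"

definition monomial_val :: "nat \<Rightarrow> (nat \<Rightarrow> nat) \<Rightarrow> (nat \<Rightarrow> complex) \<Rightarrow> complex" where
  "monomial_val n \<alpha> z = (\<Prod>i\<le>n. z i ^ \<alpha> i)"

definition conv_ps :: "nat \<Rightarrow> ((nat \<Rightarrow> nat) \<Rightarrow> complex) set" where
  "conv_ps n = {c. (\<forall>\<alpha>. \<alpha> \<notin> multi_idx n \<longrightarrow> c \<alpha> = 0) \<and>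
      (\<exists>r>0. (\<lambda>\<alpha>. norm (c \<alpha>) * r ^ (\<Sum>i\<le>n. \<alpha> i)) summable_on multi_idx n)}"

definition ps_eval :: "nat \<Rightarrow> ((nat \<Rightarrow> nat) \<Rightarrow> complex) \<Rightarrow> (nat \<Rightarrow> complex) \<Rightarrow> complex" where
  "ps_eval n c z = (\<Sum>\<^sub>\<infinity>\<alpha>\<in>multi_idx n. c \<alpha> * monomial_val n \<alpha> z)"

definition conv_ps_rest :: "nat \<Rightarrow> ((nat \<Rightarrow> nat) \<Rightarrow> complex) set" where
  "conv_ps_rest n = {c \<in> conv_ps n. \<forall>\<alpha>. c \<alpha> \<noteq> 0 \<longrightarrow> \<alpha> 0 = 0 \<and> \<alpha> 1 = 0 \<and> \<alpha> 2 = 0}"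

definition one_ps :: "(nat \<Rightarrow> nat) \<Rightarrow> complex" where
  "one_ps \<alpha> = (if \<alpha> = (\<lambda>_. 0) then 1 else 0)"

definition polydisc :: "nat \<Rightarrow> real \<Rightarrow> (nat \<Rightarrow> complex) \<Rightarrow> bool" where
  "polydisc n \<epsilon> z \<longleftrightarrow> (\<forall>i\<le>n. norm (z i) < \<epsilon>)"

text \<open>Fr(f): right-hand sides A of d alpha/dx = A/f that are free of residues.\<close>
definition Fr :: "nat \<Rightarrow> ((nat \<Rightarrow> complex) \<Rightarrow> complex) \<Rightarrow> ((nat \<Rightarrow> nat) \<Rightarrow> complex) set" where
  "Fr n f = {A \<in> conv_ps n. \<exists>\<epsilon>>0. \<forall>z. polydisc n \<epsilon> z \<longrightarrow> f z = 0 \<longrightarrow>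
      (\<exists>t. f (z(0 := t)) \<noteq> 0) \<longrightarrow>
      residue (\<lambda>t. ps_eval n A (z(0 := t)) / f (z(0 := t))) (z 0) = 0}"

definition Sp :: "nat \<Rightarrow> ((nat \<Rightarrow> complex) \<Rightarrow> complex) \<Rightarrow> ((nat \<Rightarrow> nat) \<Rightarrow> complex) set" where
  "Sp n f = {A \<in> Fr n f. \<exists>\<beta>\<in>conv_ps n. \<exists>\<epsilon>>0. \<forall>z. polydisc n \<epsilon> z \<longrightarrow> f z \<noteq> 0 \<longrightarrow>
      ((\<lambda>t. ps_eval n \<beta> (z(0 := t)) / (z 2 - t * z 1)) has_field_derivative
         (ps_eval n A z / f z)) (at (z 0))}"

end

theory Submission
  imports Defs "HOL-Computational_Algebra.Polynomial"
begin



definition dg :: "nat \<Rightarrow> (nat \<Rightarrow> nat) \<Rightarrow> nat" where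
  "dg n \<alpha> = (\<Sum>i\<le>n. \<alpha> i)"

definition psr :: "nat \<Rightarrow> ((nat \<Rightarrow> nat) \<Rightarrow> complex) \<Rightarrow> real \<Rightarrow> bool" where
  "psr n P r \<longleftrightarrow> (\<lambda>\<alpha>. norm (P \<alpha>) * r ^ dg n \<alpha>) summable_on multi_idx n"

lemma conv_ps_iff: "c \<in> conv_ps n \<longleftrightarrow> (\<forall>\<alpha>. \<alpha> \<notin> multi_idx n \<longrightarrow> c \<alpha> = 0) \<and> (\<exists>r>0. psr n c r)"
  unfolding conv_ps_def psr_def dg_def by simp

lemma mono_upd:
  assumes "i \<le> n"
  shows "monomial_val n \<alpha> (z(i:=t)) = t ^ \<alpha> i * (\<Prod>j\<in>{..n}-{i}. z j ^ \<alpha> j)"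
proof -
  have "monomial_val n \<alpha> (z(i:=t)) = (z(i:=t)) i ^ \<alpha> i * (\<Prod>j\<in>{..n}-{i}. (z(i:=t)) j ^ \<alpha> j)"
    unfolding monomial_val_def using assms by (subst prod.remove[of _ i]) auto
  also have "(\<Prod>j\<in>{..n}-{i}. (z(i:=t)) j ^ \<alpha> j) = (\<Prod>j\<in>{..n}-{i}. z j ^ \<alpha> j)"
    by (rule prod.cong) auto
  finally show ?thesis using assms by (simp only: fun_upd_same)
qed

lemma mono_scale0:
  "monomial_val n \<alpha> (z(0:=t)) = t ^ \<alpha> 0 * monomial_val n \<alpha> (z(0:=1))"
  using mono_upd[of 0 n \<alpha> z t] mono_upd[of 0 n \<alpha> z 1] by simp

lemma norm_mono_le:
  assumes "\<forall>i\<le>n. norm (z i) \<le> r"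
  shows "norm (monomial_val n \<alpha> z) \<le> r ^ dg n \<alpha>"
proof -
  have "norm (monomial_val n \<alpha> z) = (\<Prod>i\<le>n. norm (z i) ^ \<alpha> i)"
    unfolding monomial_val_def by (simp add: prod_norm[symmetric] norm_power)
  also have "\<dots> \<le> (\<Prod>i\<le>n. r ^ \<alpha> i)"
    by (rule prod_mono) (use assms in \<open>auto intro: power_mono\<close>)
  also have "\<dots> = r ^ dg n \<alpha>" unfolding dg_def by (simp add: power_sum)
  finally show ?thesis .
qed

lemma psr_abs:
  assumes "psr n P r" "\<forall>i\<le>n. norm (z i) \<le> r"
  shows "(\<lambda>\<alpha>. norm (P \<alpha> * monomial_val n \<alpha> z)) summable_on multi_idx n"
proof (rule summable_on_comparison_test[OF assms(1)[unfolded psr_def]])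
  fix \<alpha> show "norm (P \<alpha> * monomial_val n \<alpha> z) \<le> norm (P \<alpha>) * r ^ dg n \<alpha>"
    using norm_mono_le[OF assms(2)] by (simp add: norm_mult mult_left_mono)
qed auto

lemma psr_summable:
  assumes "psr n P r" "\<forall>i\<le>n. norm (z i) \<le> r"
  shows "(\<lambda>\<alpha>. P \<alpha> * monomial_val n \<alpha> z) summable_on multi_idx n"
  using psr_abs[OF assms] summable_on_iff_abs_summable_on_complex by blast

lemma psr_has_sum:
  assumes "psr n P r" "\<forall>i\<le>n. norm (z i) \<le> r"
  shows "((\<lambda>\<alpha>. P \<alpha> * monomial_val n \<alpha> z) has_sum ps_eval n P z) (multi_idx n)"
  unfolding ps_eval_def using psr_summable[OF assms] by simp

lemma psr_mono:
  assumes "psr n P r" "0 \<le> r'" "r' \<le> r"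
  shows "psr n P r'"
  unfolding psr_def
proof (rule summable_on_comparison_test[OF assms(1)[unfolded psr_def]])
  fix \<alpha> show "norm (P \<alpha>) * r' ^ dg n \<alpha> \<le> norm (P \<alpha>) * r ^ dg n \<alpha>"
    using assms by (intro mult_left_mono power_mono) auto
qed (use assms in auto)

lemma psr_bound:
  assumes "psr n P r" "\<forall>i\<le>n. norm (z i) \<le> r"
  shows "norm (ps_eval n P z) \<le> (\<Sum>\<^sub>\<infinity>\<alpha>\<in>multi_idx n. norm (P \<alpha>) * r ^ dg n \<alpha>)"
proof -
  have "norm (ps_eval n P z) \<le> (\<Sum>\<^sub>\<infinity>\<alpha>\<in>multi_idx n. norm (P \<alpha> * monomial_val n \<alpha> z))"
    unfolding ps_eval_def by (rule norm_infsum_bound) (use psr_abs[OF assms] in auto)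
  also have "\<dots> \<le> (\<Sum>\<^sub>\<infinity>\<alpha>\<in>multi_idx n. norm (P \<alpha>) * r ^ dg n \<alpha>)"
    apply (rule infsum_mono) 
    using psr_abs[OF assms] assms(1)[unfolded psr_def] norm_mono_le[OF assms(2)]
    by (auto simp: norm_mult intro: mult_left_mono)
  finally show ?thesis .
qed

lemma psr_coef_bound:
  assumes "psr n P r" "\<alpha> \<in> multi_idx n" "r > 0"
  shows "norm (P \<alpha>) * r ^ dg n \<alpha> \<le> (\<Sum>\<^sub>\<infinity>\<alpha>\<in>multi_idx n. norm (P \<alpha>) * r ^ dg n \<alpha>)"
proof -
  have "(\<Sum>\<^sub>\<infinity>\<beta>\<in>{\<alpha>}. norm (P \<beta>) * r ^ dg n \<beta>) \<le> (\<Sum>\<^sub>\<infinity>\<alpha>\<in>multi_idx n. norm (P \<alpha>) * r ^ dg n \<alpha>)"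
    by (rule infsum_mono_neutral) (use assms in \<open>auto simp: psr_def\<close>)
  thus ?thesis by simp
qed

lemma group_has_sum:
  fixes g :: "'a \<Rightarrow> complex" and \<phi> :: "'a \<Rightarrow> 'b"
  assumes "g summable_on M"
  shows "((\<lambda>k. \<Sum>\<^sub>\<infinity>\<alpha>\<in>{\<alpha>\<in>M. \<phi> \<alpha> = k}. g \<alpha>) has_sum (\<Sum>\<^sub>\<infinity>\<alpha>\<in>M. g \<alpha>)) UNIV"
    and "\<And>k. g summable_on {\<alpha>\<in>M. \<phi> \<alpha> = k}"
proof -
  have bij: "bij_betw (\<lambda>\<alpha>. (\<phi> \<alpha>, \<alpha>)) M (Sigma UNIV (\<lambda>k. {\<alpha>\<in>M. \<phi> \<alpha> = k}))"
    by (rule bij_betwI[where g=snd]) auto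
  have s: "(\<lambda>(k,\<alpha>). g \<alpha>) summable_on (Sigma UNIV (\<lambda>k. {\<alpha>\<in>M. \<phi> \<alpha> = k}))"
    using summable_on_reindex_bij_betw[OF bij, of "\<lambda>(k,\<alpha>). g \<alpha>"] assms by simp
  have e: "(\<Sum>\<^sub>\<infinity>(k,\<alpha>)\<in>Sigma UNIV (\<lambda>k. {\<alpha>\<in>M. \<phi> \<alpha> = k}). g \<alpha>) = (\<Sum>\<^sub>\<infinity>\<alpha>\<in>M. g \<alpha>)"
    using infsum_reindex_bij_betw[OF bij, of "\<lambda>(k,\<alpha>). g \<alpha>"] by simp
  show "\<And>k. g summable_on {\<alpha>\<in>M. \<phi> \<alpha> = k}"
    by (rule summable_on_subset_banach[OF assms]) auto
  have "(\<lambda>k. \<Sum>\<^sub>\<infinity>\<alpha>\<in>{\<alpha>\<in>M. \<phi> \<alpha> = k}. g \<alpha>) summable_on UNIV"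
    using summable_on_Sigma_banach[OF s] by simp
  moreover have "(\<Sum>\<^sub>\<infinity>k. \<Sum>\<^sub>\<infinity>\<alpha>\<in>{\<alpha>\<in>M. \<phi> \<alpha> = k}. g \<alpha>) = (\<Sum>\<^sub>\<infinity>\<alpha>\<in>M. g \<alpha>)"
    using infsum_Sigma'_banach[OF s] e by simp
  ultimately show "((\<lambda>k. \<Sum>\<^sub>\<infinity>\<alpha>\<in>{\<alpha>\<in>M. \<phi> \<alpha> = k}. g \<alpha>) has_sum (\<Sum>\<^sub>\<infinity>\<alpha>\<in>M. g \<alpha>)) UNIV"
    by (metis has_sum_infsum)
qed




lemma has_sum_diff':
  fixes f g :: "'a \<Rightarrow> complex"
  assumes "(f has_sum a) A" "(g has_sum b) A"
  shows "((\<lambda>x. f x - g x) has_sum (a - b)) A"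
proof -
  have "((\<lambda>x. - g x) has_sum (- b)) A" by (subst has_sum_uminus) (simp add: assms(2))
  from has_sum_add[OF assms(1) this] show ?thesis by simp
qed

definition Dx :: "((nat \<Rightarrow> nat) \<Rightarrow> complex) \<Rightarrow> (nat \<Rightarrow> nat) \<Rightarrow> complex" where
  "Dx P \<alpha> = of_nat (\<alpha> 0 + 1) * P (\<alpha>(0 := \<alpha> 0 + 1))"

lemma multi_idx_upd: "\<alpha> \<in> multi_idx n \<Longrightarrow> i \<le> n \<Longrightarrow> \<alpha>(i:=k) \<in> multi_idx n"
  unfolding multi_idx_def by auto

lemma dg_upd: "i \<le> n \<Longrightarrow> dg n (\<alpha>(i:=k)) + \<alpha> i = dg n \<alpha> + k"
proof -
  assume i: "i \<le> n"
  have "dg n (\<alpha>(i:=k)) = k + (\<Sum>j\<in>{..n}-{i}. \<alpha> j)"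
    unfolding dg_def using i by (subst sum.remove[of _ i]) (auto intro!: sum.cong)
  moreover have "dg n \<alpha> = \<alpha> i + (\<Sum>j\<in>{..n}-{i}. \<alpha> j)"
    unfolding dg_def using i by (subst sum.remove[of _ i]) auto
  ultimately show ?thesis by simp
qed

lemma le_dg: "i \<le> n \<Longrightarrow> \<alpha> i \<le> dg n \<alpha>"
  unfolding dg_def by (rule member_le_sum) auto

lemma suc_le_pow2: "Suc k \<le> 2 ^ k"
  by (induction k) auto

lemma psr_Dx:
  assumes "psr n P r" "r > 0"
  shows "psr n (Dx P) (r/2)"
proof -
  let ?M = "multi_idx n"
  let ?h = "\<lambda>\<alpha>::nat\<Rightarrow>nat. \<alpha>(0 := \<alpha> 0 + 1)"
  let ?g = "\<lambda>\<alpha>. norm (P \<alpha>) * r ^ dg n \<alpha>"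
  have inj: "inj_on ?h ?M"
  proof (rule inj_onI)
    fix a b assume "?h a = ?h b"
    hence "a 0 = b 0" "\<And>i. i \<noteq> 0 \<Longrightarrow> a i = b i"
      by (metis add_right_cancel fun_upd_same, metis fun_upd_other)
    thus "a = b" by (metis ext)
  qed
  have "?g summable_on ?h ` ?M"
    by (rule summable_on_subset_banach[OF assms(1)[unfolded psr_def]]) (auto intro: multi_idx_upd)
  hence "(?g \<circ> ?h) summable_on ?M" using summable_on_reindex[OF inj] by blast
  hence s: "(\<lambda>\<alpha>. (?g \<circ> ?h) \<alpha> * (1/r)) summable_on ?M" by (rule summable_on_cmult_left)
  show ?thesis unfolding psr_def
  proof (rule summable_on_comparison_test[OF s])
    fix \<alpha> assume "\<alpha> \<in> ?M"
    have d: "dg n (?h \<alpha>) = dg n \<alpha> + 1" using dg_upd[of 0 n \<alpha> "\<alpha> 0 + 1"] by simp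
    have k: "real (\<alpha> 0 + 1) \<le> 2 ^ dg n \<alpha>"
    proof -
      have "\<alpha> 0 + 1 \<le> 2 ^ \<alpha> 0" using suc_le_pow2 by simp
      also have "(2::nat) ^ \<alpha> 0 \<le> 2 ^ dg n \<alpha>" by (rule power_increasing) (auto intro: le_dg)
      finally show ?thesis by (metis of_nat_le_iff of_nat_numeral of_nat_power)
    qed
    have "norm (Dx P \<alpha>) * (r/2) ^ dg n \<alpha> = norm (P (?h \<alpha>)) * (real (\<alpha> 0 + 1) * (r/2) ^ dg n \<alpha>)"
      unfolding Dx_def norm_mult norm_of_nat by (simp add: mult_ac)
    also have "\<dots> \<le> norm (P (?h \<alpha>)) * (2 ^ dg n \<alpha> * (r/2) ^ dg n \<alpha>)"
      using k assms(2) by (intro mult_left_mono mult_right_mono) auto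
    also have "2 ^ dg n \<alpha> * (r/2) ^ dg n \<alpha> = r ^ dg n \<alpha>"
      by (simp add: power_mult_distrib[symmetric])
    also have "norm (P (?h \<alpha>)) * r ^ dg n \<alpha> = (?g \<circ> ?h) \<alpha> * (1/r)"
      using assms(2) d by simp
    finally show "norm (Dx P \<alpha>) * (r/2) ^ dg n \<alpha> \<le> (?g \<circ> ?h) \<alpha> * (1/r)" .
  qed (use assms(2) in auto)
qed

lemma mono_w0: "monomial_val n (\<alpha>(0:=k)) (z(0:=1)) = monomial_val n \<alpha> (z(0:=1))"
  using mono_upd[of 0 n "\<alpha>(0:=k)" z 1] mono_upd[of 0 n \<alpha> z 1] by simp

lemma ps_t_sums:
  assumes "psr n P r" "\<forall>i\<le>n. i \<noteq> 0 \<longrightarrow> norm (z i) \<le> r" "norm t \<le> r"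
  shows "(\<lambda>k. (\<Sum>\<^sub>\<infinity>\<alpha>\<in>{\<alpha>\<in>multi_idx n. \<alpha> 0 = k}. P \<alpha> * monomial_val n \<alpha> (z(0:=1))) * t ^ k)
           sums ps_eval n P (z(0:=t))"
proof -
  let ?M = "multi_idx n"
  have c: "\<forall>i\<le>n. norm ((z(0:=t)) i) \<le> r" using assms by auto
  have s: "(\<lambda>\<alpha>. P \<alpha> * monomial_val n \<alpha> (z(0:=t))) summable_on ?M"
    by (rule psr_summable[OF assms(1) c])
  from group_has_sum(1)[OF s, of "\<lambda>\<alpha>. \<alpha> 0"]
  have h: "((\<lambda>k. \<Sum>\<^sub>\<infinity>\<alpha>\<in>{\<alpha>\<in>?M. \<alpha> 0 = k}. P \<alpha> * monomial_val n \<alpha> (z(0:=t))) has_sum ps_eval n P (z(0:=t))) UNIV"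
    unfolding ps_eval_def .
  have "(\<Sum>\<^sub>\<infinity>\<alpha>\<in>{\<alpha>\<in>?M. \<alpha> 0 = k}. P \<alpha> * monomial_val n \<alpha> (z(0:=t)))
      = (\<Sum>\<^sub>\<infinity>\<alpha>\<in>{\<alpha>\<in>?M. \<alpha> 0 = k}. P \<alpha> * monomial_val n \<alpha> (z(0:=1))) * t ^ k" for k
  proof -
    have "(\<Sum>\<^sub>\<infinity>\<alpha>\<in>{\<alpha>\<in>?M. \<alpha> 0 = k}. P \<alpha> * monomial_val n \<alpha> (z(0:=t)))
       = (\<Sum>\<^sub>\<infinity>\<alpha>\<in>{\<alpha>\<in>?M. \<alpha> 0 = k}. P \<alpha> * monomial_val n \<alpha> (z(0:=1)) * t ^ k)"
      by (rule infsum_cong) (subst mono_scale0, simp)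
    also have "\<dots> = (\<Sum>\<^sub>\<infinity>\<alpha>\<in>{\<alpha>\<in>?M. \<alpha> 0 = k}. P \<alpha> * monomial_val n \<alpha> (z(0:=1))) * t ^ k"
      by (rule infsum_cmult_left')
    finally show ?thesis .
  qed
  with h show ?thesis by (intro has_sum_imp_sums) simp
qed

lemma DL:
  assumes "psr n P r" "r > 0" "\<forall>i\<le>n. norm (z i) < r/2"
  shows "((\<lambda>t. ps_eval n P (z(0:=t))) has_field_derivative ps_eval n (Dx P) z) (at (z 0))"
proof -
  let ?M = "multi_idx n"
  define a where "a k = (\<Sum>\<^sub>\<infinity>\<alpha>\<in>{\<alpha>\<in>?M. \<alpha> 0 = k}. P \<alpha> * monomial_val n \<alpha> (z(0:=1)))" for k
  have zi: "\<forall>i\<le>n. i \<noteq> 0 \<longrightarrow> norm (z i) \<le> r" using assms by force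
  have S: "norm t \<le> r \<Longrightarrow> (\<lambda>k. a k * t ^ k) sums ps_eval n P (z(0:=t))" for t
    unfolding a_def by (rule ps_t_sums[OF assms(1) zi])
  have sK: "summable (\<lambda>k. a k * complex_of_real r ^ k)"
    using S[of "complex_of_real r"] assms(2) sums_summable by auto
  have z0: "norm (z 0) < norm (complex_of_real r)"
  proof -
    have "norm (z 0) < r/2" using assms(3) by auto
    moreover have "norm (complex_of_real r) = r" using assms(2) by simp
    ultimately show ?thesis using assms(2) by linarith
  qed
  have D: "((\<lambda>t. \<Sum>k. a k * t ^ k) has_field_derivative (\<Sum>k. diffs a k * z 0 ^ k)) (at (z 0))"
    by (rule termdiffs_strong[OF sK z0])
  have D2: "((\<lambda>t. ps_eval n P (z(0:=t))) has_field_derivative (\<Sum>k. diffs a k * z 0 ^ k)) (at (z 0))"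
  proof (rule has_field_derivative_transform_within_open[OF D, of "ball (0::complex) r"])
    show "z 0 \<in> ball (0::complex) r" using z0 assms(2) by simp
    fix t :: complex assume "t \<in> ball 0 r"
    hence "norm t \<le> r" by simp
    from sums_unique[OF S[OF this]] show "(\<Sum>k. a k * t ^ k) = ps_eval n P (z(0:=t))" by simp
  qed simp
  have pD: "psr n (Dx P) (r/2)" by (rule psr_Dx[OF assms(1,2)])
  have cz: "\<forall>i\<le>n. norm ((z(0:=z 0)) i) \<le> r/2" using assms by (auto simp: less_imp_le)
  have zi2: "\<forall>i\<le>n. i \<noteq> 0 \<longrightarrow> norm (z i) \<le> r/2" using assms by (auto simp: less_imp_le)
  have S2: "(\<lambda>k. (\<Sum>\<^sub>\<infinity>\<alpha>\<in>{\<alpha>\<in>?M. \<alpha> 0 = k}. Dx P \<alpha> * monomial_val n \<alpha> (z(0:=1))) * z 0 ^ k)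
           sums ps_eval n (Dx P) (z(0:=z 0))"
    by (rule ps_t_sums[OF pD zi2]) (use assms in \<open>auto simp: less_imp_le\<close>)
  have eq: "(\<Sum>\<^sub>\<infinity>\<alpha>\<in>{\<alpha>\<in>?M. \<alpha> 0 = k}. Dx P \<alpha> * monomial_val n \<alpha> (z(0:=1))) = diffs a k" for k
  proof -
    have bij: "bij_betw (\<lambda>\<alpha>. \<alpha>(0 := k+1)) {\<alpha>\<in>?M. \<alpha> 0 = k} {\<alpha>\<in>?M. \<alpha> 0 = Suc k}"
      by (rule bij_betwI[where g="\<lambda>\<alpha>. \<alpha>(0 := k)"]) (auto intro: multi_idx_upd)
    have "(\<Sum>\<^sub>\<infinity>\<alpha>\<in>{\<alpha>\<in>?M. \<alpha> 0 = k}. Dx P \<alpha> * monomial_val n \<alpha> (z(0:=1)))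
        = (\<Sum>\<^sub>\<infinity>\<alpha>\<in>{\<alpha>\<in>?M. \<alpha> 0 = k}. of_nat (Suc k) * (P (\<alpha>(0 := k+1)) * monomial_val n (\<alpha>(0 := k+1)) (z(0:=1))))"
      by (rule infsum_cong) (simp add: Dx_def mono_w0)
    also have "\<dots> = of_nat (Suc k) * (\<Sum>\<^sub>\<infinity>\<alpha>\<in>{\<alpha>\<in>?M. \<alpha> 0 = k}. P (\<alpha>(0 := k+1)) * monomial_val n (\<alpha>(0 := k+1)) (z(0:=1)))"
      by (rule infsum_cmult_right')
    also have "(\<Sum>\<^sub>\<infinity>\<alpha>\<in>{\<alpha>\<in>?M. \<alpha> 0 = k}. P (\<alpha>(0 := k+1)) * monomial_val n (\<alpha>(0 := k+1)) (z(0:=1))) = a (Suc k)"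
      unfolding a_def by (rule infsum_reindex_bij_betw[OF bij, of "\<lambda>\<alpha>. P \<alpha> * monomial_val n \<alpha> (z(0:=1))"])
    finally show ?thesis unfolding diffs_def .
  qed
  have "ps_eval n (Dx P) z = (\<Sum>k. diffs a k * z 0 ^ k)"
    using sums_unique[OF S2] eq by simp
  with D2 show ?thesis by simp
qed




lemma RL:
  assumes "psr n P r" "r > 0" "\<forall>i\<le>n. norm (z i) < r/2" "z 2 = z 0 * z 1"
  shows "residue (\<lambda>t. ps_eval n P (z(0:=t)) / (z 2 - t * z 1)^2) (z 0) = ps_eval n (Dx P) z / (z 1)^2"
proof -
  define h where "h = (\<lambda>t. ps_eval n P (z(0:=t)))"
  let ?s = "ball (0::complex) (r/2)"
  have hd: "(h has_field_derivative ps_eval n (Dx P) (z(0:=t))) (at t)" if "t \<in> ?s" for t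
  proof -
    have "\<forall>i\<le>n. norm ((z(0:=t)) i) < r/2" using assms(3) that by auto
    from DL[OF assms(1,2) this] show ?thesis unfolding h_def by (simp only: fun_upd_upd fun_upd_same)
  qed
  have hol: "(\<lambda>t. h t / (z 1)^2) holomorphic_on ?s"
    unfolding holomorphic_on_def
  proof
    fix x assume "x \<in> ?s"
    have "((\<lambda>t. h t / (z 1)^2) has_field_derivative ps_eval n (Dx P) (z(0:=x)) / (z 1)^2) (at x)"
      by (rule DERIV_cdivide[OF hd[OF \<open>x \<in> ?s\<close>]])
    thus "(\<lambda>t. h t / (z 1)^2) field_differentiable at x within ?s"
      using field_differentiable_def field_differentiable_at_within by blast
  qed
  have z0: "z 0 \<in> ?s" using assms(3) by auto
  have eq: "(\<lambda>t. ps_eval n P (z(0:=t)) / (z 2 - t * z 1)^2) = (\<lambda>t. (h t / (z 1)^2) / (t - z 0) ^ Suc 1)"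
  proof
    fix t
    have "(z 2 - t * z 1)^2 = (z 1)^2 * (t - z 0) ^ Suc 1" using assms(4) by (simp add: power2_eq_square algebra_simps)
    thus "ps_eval n P (z(0:=t)) / (z 2 - t * z 1)^2 = (h t / (z 1)^2) / (t - z 0) ^ Suc 1"
      unfolding h_def by (simp add: divide_divide_eq_left)
  qed
  have R: "residue (\<lambda>t. (h t / (z 1)^2) / (t - z 0) ^ Suc 1) (z 0) = (deriv ^^ 1) (\<lambda>t. h t / (z 1)^2) (z 0) / fact 1"
    by (rule residue_holomorphic_over_power[OF _ z0 hol]) simp
  have "residue (\<lambda>t. ps_eval n P (z(0:=t)) / (z 2 - t * z 1)^2) (z 0) = (deriv ^^ 1) (\<lambda>t. h t / (z 1)^2) (z 0) / fact 1"
    unfolding eq by (rule R)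
  also have "\<dots> = deriv (\<lambda>t. h t / (z 1)^2) (z 0)" by simp
  also have "\<dots> = ps_eval n (Dx P) z / (z 1)^2"
    using DERIV_imp_deriv[OF DERIV_cdivide[OF hd[OF z0]]] by simp
  finally show ?thesis .
qed




lemma digits_lt:
  fixes a :: "nat \<Rightarrow> nat"
  assumes "\<forall>i\<le>m. a i < B"
  shows "(\<Sum>i\<le>m. a i * B ^ i) < B ^ Suc m"
  using assms
proof (induction m)
  case 0 thus ?case by simp
next
  case (Suc m)
  define Q where "Q = B ^ Suc m"
  have IH: "(\<Sum>i\<le>m. a i * B ^ i) < Q" using Suc unfolding Q_def by simp
  have "(a (Suc m) + 1) * Q \<le> B * Q"
    using Suc.prems by (intro mult_right_mono) auto
  hence H: "a (Suc m) * Q + Q \<le> B * Q" by (simp only: distrib_right mult_1_left)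
  have e1: "(\<Sum>i\<le>Suc m. a i * B ^ i) = (\<Sum>i\<le>m. a i * B ^ i) + a (Suc m) * Q"
    unfolding Q_def by (simp only: sum.atMost_Suc)
  have e2: "B ^ Suc (Suc m) = B * Q" unfolding Q_def by (simp only: power_Suc)
  show ?case unfolding e1 e2 using IH H by linarith
qed

lemma divmod_unique_aux:
  fixes x y a b Q :: nat
  assumes "x < Q" "y < Q" "x + a * Q = y + b * Q"
  shows "a = b \<and> x = y"
proof -
  have "(x + a * Q) div Q = a" using assms(1) by simp
  moreover have "(y + b * Q) div Q = b" using assms(2) by simp
  ultimately have "a = b" using assms(3) by metis
  with assms(3) show ?thesis by simp
qed

lemma digits_inj:
  fixes a b :: "nat \<Rightarrow> nat"
  assumes "\<forall>i\<le>m. a i < B" "\<forall>i\<le>m. b i < B"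
    and "(\<Sum>i\<le>m. a i * B ^ i) = (\<Sum>i\<le>m. b i * B ^ i)"
  shows "\<forall>i\<le>m. a i = b i"
  using assms
proof (induction m)
  case 0 thus ?case by simp
next
  case (Suc m)
  define Q where "Q = B ^ Suc m"
  define x where "x = (\<Sum>i\<le>m. a i * B ^ i)"
  define y where "y = (\<Sum>i\<le>m. b i * B ^ i)"
  have xl: "x < Q" unfolding x_def Q_def by (rule digits_lt) (use Suc.prems in auto)
  have yl: "y < Q" unfolding y_def Q_def by (rule digits_lt) (use Suc.prems in auto)
  have ea: "(\<Sum>i\<le>Suc m. a i * B ^ i) = x + a (Suc m) * Q" unfolding x_def Q_def by (rule sum.atMost_Suc)
  have eb: "(\<Sum>i\<le>Suc m. b i * B ^ i) = y + b (Suc m) * Q" unfolding y_def Q_def by (rule sum.atMost_Suc)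
  have e: "x + a (Suc m) * Q = y + b (Suc m) * Q" using Suc.prems(3) unfolding ea eb .
  from divmod_unique_aux[OF xl yl e] have t: "a (Suc m) = b (Suc m)" and xy: "x = y" by auto
  have "\<forall>i\<le>m. a i = b i" by (rule Suc.IH) (use Suc.prems xy in \<open>auto simp: x_def y_def\<close>)
  with t show ?case by (metis le_Suc_eq)
qed

lemma finite_S: "finite {\<alpha>\<in>multi_idx n. dg n \<alpha> = d}"
proof (rule finite_subset)
  show "{\<alpha>\<in>multi_idx n. dg n \<alpha> = d} \<subseteq> {f. \<forall>x. (x \<in> {..n} \<longrightarrow> f x \<in> {..d}) \<and> (x \<notin> {..n} \<longrightarrow> f x = 0)}"
  proof (intro subsetI CollectI allI conjI impI)
    fix \<alpha> x assume a: "\<alpha> \<in> {\<alpha>\<in>multi_idx n. dg n \<alpha> = d}"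
    show "x \<in> {..n} \<Longrightarrow> \<alpha> x \<in> {..d}" using le_dg[of x n \<alpha>] a by auto
    show "x \<notin> {..n} \<Longrightarrow> \<alpha> x = 0" using a unfolding multi_idx_def by auto
  qed
  show "finite {f. \<forall>x. (x \<in> {..n} \<longrightarrow> f x \<in> {..d}) \<and> (x \<notin> {..n} \<longrightarrow> (f x::nat) = 0)}"
    by (rule finite_set_of_finite_funs) auto
qed

lemma mono_smult: "monomial_val n \<alpha> (\<lambda>i. t * z i) = t ^ dg n \<alpha> * monomial_val n \<alpha> z"
proof -
  have "monomial_val n \<alpha> (\<lambda>i. t * z i) = (\<Prod>i\<le>n. t ^ \<alpha> i * z i ^ \<alpha> i)"
    unfolding monomial_val_def by (simp only: power_mult_distrib)
  also have "\<dots> = (\<Prod>i\<le>n. t ^ \<alpha> i) * monomial_val n \<alpha> z"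
    unfolding monomial_val_def by (rule prod.distrib)
  also have "(\<Prod>i\<le>n. t ^ \<alpha> i) = t ^ dg n \<alpha>" unfolding dg_def by (rule power_sum[symmetric])
  finally show ?thesis .
qed



lemma IT_homog:
  assumes "\<delta> > 0"
    and H: "\<forall>z. (\<forall>i\<le>n. 0 < norm (z i) \<and> norm (z i) < \<delta>) \<longrightarrow> ((\<lambda>\<alpha>. P \<alpha> * monomial_val n \<alpha> z) has_sum 0) (multi_idx n)"
    and z: "\<forall>i\<le>n. 0 < norm (z i) \<and> norm (z i) < \<delta>"
  shows "(\<Sum>\<alpha>\<in>{\<alpha>\<in>multi_idx n. dg n \<alpha> = d}. P \<alpha> * monomial_val n \<alpha> z) = 0"
proof -
  let ?M = "multi_idx n"
  define h where "h d = (\<Sum>\<alpha>\<in>{\<alpha>\<in>?M. dg n \<alpha> = d}. P \<alpha> * monomial_val n \<alpha> z)" for d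
  have S: "(\<lambda>d. h d * t ^ d) sums 0" if t: "0 < norm t" "norm t \<le> 1" for t :: complex
  proof -
    have c: "\<forall>i\<le>n. 0 < norm (t * z i) \<and> norm (t * z i) < \<delta>"
    proof (intro allI impI conjI)
      fix i assume "i \<le> n"
      thus "0 < norm (t * z i)" using z t by (simp add: norm_mult)
      have "norm (t * z i) \<le> norm (z i)" using t by (simp add: norm_mult mult_left_le_one_le)
      moreover have "norm (z i) < \<delta>" using z \<open>i \<le> n\<close> by blast
      ultimately show "norm (t * z i) < \<delta>" by linarith
    qed
    have hs: "((\<lambda>\<alpha>. P \<alpha> * monomial_val n \<alpha> (\<lambda>i. t * z i)) has_sum 0) ?M" using spec[OF H, of "\<lambda>i. t * z i"] c by simp
    have eq0: "(\<Sum>\<^sub>\<infinity>\<alpha>\<in>?M. P \<alpha> * monomial_val n \<alpha> (\<lambda>i. t * z i)) = 0" by (rule infsumI[OF hs])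
    from group_has_sum(1)[OF has_sum_imp_summable[OF hs], of "dg n"]
    have g: "((\<lambda>k. \<Sum>\<^sub>\<infinity>\<alpha>\<in>{\<alpha>\<in>?M. dg n \<alpha> = k}. P \<alpha> * monomial_val n \<alpha> (\<lambda>i. t * z i)) has_sum 0) UNIV"
      unfolding eq0 .
    have hk: "(\<Sum>\<^sub>\<infinity>\<alpha>\<in>{\<alpha>\<in>?M. dg n \<alpha> = k}. P \<alpha> * monomial_val n \<alpha> (\<lambda>i. t * z i)) = h k * t ^ k" for k
    proof -
      have "(\<Sum>\<^sub>\<infinity>\<alpha>\<in>{\<alpha>\<in>?M. dg n \<alpha> = k}. P \<alpha> * monomial_val n \<alpha> (\<lambda>i. t * z i))
          = (\<Sum>\<alpha>\<in>{\<alpha>\<in>?M. dg n \<alpha> = k}. P \<alpha> * monomial_val n \<alpha> z * t ^ k)"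
        by (subst infsum_finite[OF finite_S], rule sum.cong) (auto simp: mono_smult)
      also have "\<dots> = h k * t ^ k" unfolding h_def by (simp add: sum_distrib_right)
      finally show ?thesis .
    qed
    have "((\<lambda>k. h k * t ^ k) has_sum 0) UNIV" using g unfolding hk .
    thus ?thesis by (rule has_sum_imp_sums)
  qed
  define F where "F t = (\<Sum>d. h d * t ^ d)" for t :: complex
  have s1: "summable (\<lambda>d. h d * 1 ^ d)" using S[of 1] sums_summable by auto
  have F0: "F t = 0" if "0 < norm t" "norm t \<le> 1" for t unfolding F_def using sums_unique[OF S[OF that]] by simp
  have h0: "h 0 = 0"
  proof -
    have "isCont F 0" unfolding F_def by (rule isCont_powser[OF s1]) simp
    hence l1: "(F \<longlongrightarrow> F 0) (at 0)" by (simp add: isCont_def)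
    have "eventually (\<lambda>t. F t = 0) (at (0::complex))"
      unfolding eventually_at by (rule exI[of _ 1]) (auto intro: F0)
    hence l2: "(F \<longlongrightarrow> 0) (at 0)" by (simp add: tendsto_eventually)
    have "F 0 = 0" using tendsto_unique[OF _ l1 l2] by simp
    thus ?thesis unfolding F_def by simp
  qed
  show ?thesis
  proof (rule ccontr)
    assume "(\<Sum>\<alpha>\<in>{\<alpha>\<in>?M. dg n \<alpha> = d}. P \<alpha> * monomial_val n \<alpha> z) \<noteq> 0"
    hence hd: "h d \<noteq> 0" unfolding h_def .
    hence dpos: "d > 0" using h0 by (cases d) auto
    have sm: "(\<lambda>k. h k * (x - 0) ^ k) sums F x" if "norm (x - 0) < 1" for x
    proof -
      have "summable (\<lambda>k. h k * x ^ k)" by (rule powser_inside[OF s1]) (use that in simp)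
      thus ?thesis unfolding F_def by (simp add: summable_sums)
    qed
    have "F 0 = 0" unfolding F_def using h0 by simp
    from powser_0_nonzero[where r=1 and a=h and \<xi>=0 and f=F, OF _ sm this hd dpos]
    obtain s where s: "0 < s" "\<And>x. x \<in> cball 0 s - {0} \<Longrightarrow> F x \<noteq> 0" by auto
    define x where "x = complex_of_real (min s (1/2))"
    have "x \<in> cball 0 s - {0}" unfolding x_def using s(1) by auto
    moreover have "F x = 0" by (rule F0) (unfold x_def, use s(1) in auto)
    ultimately show False using s(2) by blast
  qed
qed




lemma mono_zx:
  fixes x \<rho> :: real
  shows "monomial_val n \<alpha> (\<lambda>i. complex_of_real (\<rho> * x ^ (B ^ i)))
       = complex_of_real \<rho> ^ dg n \<alpha> * complex_of_real x ^ (\<Sum>i\<le>n. \<alpha> i * B ^ i)"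
proof -
  have r: "(\<Prod>i\<le>n. (\<rho> * x ^ (B ^ i)) ^ \<alpha> i) = \<rho> ^ dg n \<alpha> * x ^ (\<Sum>i\<le>n. \<alpha> i * B ^ i)"
  proof -
    have "(\<Prod>i\<le>n. (\<rho> * x ^ (B ^ i)) ^ \<alpha> i) = (\<Prod>i\<le>n. \<rho> ^ \<alpha> i * x ^ (\<alpha> i * B ^ i))"
      by (rule prod.cong) (simp_all add: power_mult_distrib power_mult[symmetric] mult.commute)
    also have "\<dots> = (\<Prod>i\<le>n. \<rho> ^ \<alpha> i) * (\<Prod>i\<le>n. x ^ (\<alpha> i * B ^ i))" by (rule prod.distrib)
    also have "\<dots> = \<rho> ^ dg n \<alpha> * x ^ (\<Sum>i\<le>n. \<alpha> i * B ^ i)" unfolding dg_def by (simp only: power_sum)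
    finally show ?thesis .
  qed
  have "monomial_val n \<alpha> (\<lambda>i. complex_of_real (\<rho> * x ^ (B ^ i))) = complex_of_real (\<Prod>i\<le>n. (\<rho> * x ^ (B ^ i)) ^ \<alpha> i)"
    unfolding monomial_val_def by simp
  also have "\<dots> = complex_of_real \<rho> ^ dg n \<alpha> * complex_of_real x ^ (\<Sum>i\<le>n. \<alpha> i * B ^ i)"
    unfolding r by simp
  finally show ?thesis .
qed

lemma IT:
  assumes "\<delta> > 0"
    and H: "\<forall>z. (\<forall>i\<le>n. 0 < norm (z i) \<and> norm (z i) < \<delta>) \<longrightarrow> ((\<lambda>\<alpha>. P \<alpha> * monomial_val n \<alpha> z) has_sum 0) (multi_idx n)"
  shows "\<forall>\<alpha>\<in>multi_idx n. P \<alpha> = 0"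
proof
  fix a assume aM: "a \<in> multi_idx n"
  let ?M = "multi_idx n"
  define d where "d = dg n a"
  define B where "B = Suc d"
  define \<rho> where "\<rho> = \<delta> / 2"
  define S where "S = {\<alpha>\<in>?M. dg n \<alpha> = d}"
  define e where "e \<alpha> = (\<Sum>i\<le>n. \<alpha> i * B ^ i)" for \<alpha> :: "nat \<Rightarrow> nat"
  define p where "p = (\<Sum>\<alpha>\<in>S. monom (P \<alpha> * complex_of_real \<rho> ^ d) (e \<alpha>))"
  have fS: "finite S" unfolding S_def by (rule finite_S)
  have \<rho>: "0 < \<rho>" "\<rho> < \<delta>" unfolding \<rho>_def using assms(1) by auto
  have root: "poly p (complex_of_real x) = 0" if x: "0 < x" "x < 1" for x :: real
  proof -
    define zx where "zx = (\<lambda>i. complex_of_real (\<rho> * x ^ (B ^ i)))"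
    have c: "\<forall>i\<le>n. 0 < norm (zx i) \<and> norm (zx i) < \<delta>"
    proof (intro allI impI conjI)
      fix i
      have p1: "0 < x ^ (B ^ i)" using x by simp
      have p2: "x ^ (B ^ i) \<le> 1" using x by (simp add: power_le_one)
      have nz: "norm (zx i) = \<rho> * x ^ (B ^ i)" unfolding zx_def norm_of_real using p1 \<rho>(1) by (simp add: abs_of_pos)
      show "0 < norm (zx i)" unfolding nz using p1 \<rho> by simp
      have "\<rho> * x ^ (B ^ i) \<le> \<rho>" using p2 \<rho> by (simp add: mult_left_le_one_le)
      thus "norm (zx i) < \<delta>" unfolding nz using \<rho> by linarith
    qed
    have "(\<Sum>\<alpha>\<in>S. P \<alpha> * monomial_val n \<alpha> zx) = 0"
      unfolding S_def by (rule IT_homog[OF assms(1) H c])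
    moreover have "(\<Sum>\<alpha>\<in>S. P \<alpha> * monomial_val n \<alpha> zx) = poly p (complex_of_real x)"
      unfolding p_def poly_sum poly_monom
    proof (rule sum.cong)
      fix \<alpha> assume "\<alpha> \<in> S"
      hence "dg n \<alpha> = d" unfolding S_def by simp
      thus "P \<alpha> * monomial_val n \<alpha> zx = P \<alpha> * complex_of_real \<rho> ^ d * complex_of_real x ^ e \<alpha>"
        unfolding zx_def mono_zx e_def by simp
    qed simp
    ultimately show ?thesis by simp
  qed
  have p0: "p = 0"
  proof (rule ccontr)
    assume "p \<noteq> 0"
    hence fin: "finite {t. poly p t = 0}" by (rule poly_roots_finite)
    have "complex_of_real ` {0<..<1} \<subseteq> {t. poly p t = 0}" using root by auto
    hence "finite (complex_of_real ` {0<..<(1::real)})" using fin finite_subset by blast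
    moreover have "inj_on complex_of_real {0<..<(1::real)}" by (simp add: inj_on_def)
    ultimately have "finite {0<..<(1::real)}" using finite_imageD by blast
    thus False using infinite_Ioo[of "0::real" 1] by simp
  qed
  have ltB: "\<forall>i\<le>n. \<alpha> i < B" if "\<alpha> \<in> S" for \<alpha>
    using that le_dg unfolding S_def B_def by (auto simp: le_imp_less_Suc)
  have inj: "\<alpha> = a" if "\<alpha> \<in> S" "e \<alpha> = e a" for \<alpha>
  proof -
    have aS: "a \<in> S" unfolding S_def d_def using aM by simp
    have "\<forall>i\<le>n. \<alpha> i = a i" by (rule digits_inj[OF ltB[OF that(1)] ltB[OF aS]]) (use that(2) in \<open>simp add: e_def\<close>)
    moreover have "\<forall>i>n. \<alpha> i = 0 \<and> a i = 0" using that(1) aM unfolding S_def multi_idx_def by auto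
    ultimately show ?thesis by (metis ext not_le)
  qed
  have "coeff p (e a) = (\<Sum>\<alpha>\<in>S. if \<alpha> = a then P \<alpha> * complex_of_real \<rho> ^ d else 0)"
    unfolding p_def coeff_sum coeff_monom by (rule sum.cong) (use inj in auto)
  also have "\<dots> = P a * complex_of_real \<rho> ^ d"
    using fS aM by (simp add: sum.delta S_def d_def)
  finally have "P a * complex_of_real \<rho> ^ d = 0" using p0 by simp
  thus "P a = 0" using \<rho> by simp
qed




definition ff :: "(nat \<Rightarrow> complex) \<Rightarrow> complex" where
  "ff z = (z 2 - z 0 * z 1) ^ 2"

lemma ff_upd0: "ff (z(0:=t)) = (z 2 - t * z 1)^2"
  unfolding ff_def by simp

lemma ps_eval_zero: "ps_eval n (\<lambda>_. 0) z = 0"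
  unfolding ps_eval_def by simp

lemma IND:
  assumes "\<forall>\<alpha>. P \<alpha> \<noteq> 0 \<longrightarrow> \<alpha> 0 = 0 \<and> \<alpha> 1 = 0 \<and> \<alpha> 2 = 0"
    and "\<forall>i. i \<noteq> 0 \<and> i \<noteq> 1 \<and> i \<noteq> 2 \<longrightarrow> w i = w' i"
  shows "ps_eval n P w = ps_eval n P w'"
  unfolding ps_eval_def
proof (rule infsum_cong)
  fix \<alpha>
  show "P \<alpha> * monomial_val n \<alpha> w = P \<alpha> * monomial_val n \<alpha> w'"
  proof (cases "P \<alpha> = 0")
    case False
    hence a: "\<alpha> 0 = 0" "\<alpha> 1 = 0" "\<alpha> 2 = 0" using assms(1) by auto
    have "monomial_val n \<alpha> w = monomial_val n \<alpha> w'"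
      unfolding monomial_val_def
    proof (rule prod.cong)
      fix i show "w i ^ \<alpha> i = w' i ^ \<alpha> i"
        using a assms(2) by (cases "i = 0 \<or> i = 1 \<or> i = 2") auto
    qed simp
    thus ?thesis by simp
  qed simp
qed

lemma Dx_zero_if:
  assumes "\<forall>\<alpha>. P \<alpha> \<noteq> 0 \<longrightarrow> \<alpha> 0 = 0"
  shows "Dx P = (\<lambda>_. 0)"
  using assms unfolding Dx_def by (auto simp: fun_eq_iff)

lemma Fr_crit:
  assumes "P \<in> conv_ps n" "psr n P r" "r > 0" "\<epsilon> > 0"
    and "\<forall>z. (\<forall>i\<le>n. norm (z i) < \<epsilon>) \<longrightarrow> z 2 = z 0 * z 1 \<longrightarrow> z 1 \<noteq> 0 \<longrightarrow> ps_eval n (Dx P) z = 0"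
  shows "P \<in> Fr n ff"
  unfolding Fr_def
proof (intro CollectI conjI exI[of _ "min \<epsilon> (r/2)"] allI impI)
  show "P \<in> conv_ps n" by fact
  show "min \<epsilon> (r/2) > 0" using assms by simp
  fix z assume pd: "polydisc n (min \<epsilon> (r / 2)) z" and f0: "ff z = 0" and ex: "\<exists>t. ff (z(0 := t)) \<noteq> 0"
  have z2: "z 2 = z 0 * z 1" using f0 unfolding ff_def by simp
  have z1: "z 1 \<noteq> 0"
  proof
    assume "z 1 = 0"
    with ex z2 show False unfolding ff_upd0 by simp
  qed
  have c: "\<forall>i\<le>n. norm (z i) < r/2" using pd unfolding polydisc_def by auto
  have "residue (\<lambda>t. ps_eval n P (z(0:=t)) / ff (z(0:=t))) (z 0)
       = residue (\<lambda>t. ps_eval n P (z(0:=t)) / (z 2 - t * z 1)^2) (z 0)"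
    unfolding ff_upd0 ..
  also have "\<dots> = ps_eval n (Dx P) z / (z 1)^2" by (rule RL[OF assms(2,3) c z2])
  also have "ps_eval n (Dx P) z = 0"
    using assms(5) pd z2 z1 unfolding polydisc_def by auto
  finally show "residue (\<lambda>t. ps_eval n P (z(0:=t)) / ff (z(0:=t))) (z 0) = 0" by (simp only: div_0)
qed

lemma conv_ps_psr:
  assumes "P \<in> conv_ps n"
  obtains r where "r > 0" "psr n P r"
  using assms unfolding conv_ps_iff by auto

lemma claim2:
  assumes "c \<in> conv_ps_rest n"
  shows "c \<in> Fr n ff"
proof -
  have cc: "c \<in> conv_ps n" and rest: "\<forall>\<alpha>. c \<alpha> \<noteq> 0 \<longrightarrow> \<alpha> 0 = 0 \<and> \<alpha> 1 = 0 \<and> \<alpha> 2 = 0"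
    using assms unfolding conv_ps_rest_def by auto
  obtain r where r: "r > 0" "psr n c r" using conv_ps_psr[OF cc] by blast
  have "Dx c = (\<lambda>_. 0)" by (rule Dx_zero_if) (use rest in auto)
  show ?thesis
    by (rule Fr_crit[OF cc r(2) r(1), of 1]) (auto simp: \<open>Dx c = (\<lambda>_. 0)\<close> ps_eval_zero)
qed

lemma Fr_D:
  assumes "A \<in> Fr n ff" "psr n A r" "r > 0"
  shows "\<exists>\<epsilon>>0. \<forall>z. (\<forall>i\<le>n. norm (z i) < \<epsilon>) \<longrightarrow> z 2 = z 0 * z 1 \<longrightarrow> z 1 \<noteq> 0 \<longrightarrow> ps_eval n (Dx A) z = 0"
proof -
  obtain \<epsilon> where e: "\<epsilon> > 0" and H: "\<forall>z. polydisc n \<epsilon> z \<longrightarrow> ff z = 0 \<longrightarrow>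
      (\<exists>t. ff (z(0 := t)) \<noteq> 0) \<longrightarrow>
      residue (\<lambda>t. ps_eval n A (z(0 := t)) / ff (z(0 := t))) (z 0) = 0"
    using assms(1) unfolding Fr_def by blast
  show ?thesis
  proof (intro exI[of _ "min \<epsilon> (r/2)"] conjI allI impI)
    show "min \<epsilon> (r/2) > 0" using e assms(3) by simp
    fix z :: "nat \<Rightarrow> complex" assume pd: "\<forall>i\<le>n. norm (z i) < min \<epsilon> (r/2)" and z2: "z 2 = z 0 * z 1" and z1: "z 1 \<noteq> 0"
    have "polydisc n \<epsilon> z" using pd unfolding polydisc_def by auto
    moreover have "ff z = 0" unfolding ff_def z2 by simp
    moreover have "ff (z(0 := z 0 + 1)) \<noteq> 0" unfolding ff_upd0 z2 using z1 by (simp add: algebra_simps)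
    ultimately have "residue (\<lambda>t. ps_eval n A (z(0 := t)) / ff (z(0 := t))) (z 0) = 0" using H by blast
    hence "residue (\<lambda>t. ps_eval n A (z(0 := t)) / (z 2 - t * z 1)^2) (z 0) = 0" unfolding ff_upd0 .
    moreover have c: "\<forall>i\<le>n. norm (z i) < r/2" using pd by auto
    ultimately have "ps_eval n (Dx A) z / (z 1)^2 = 0" using RL[OF assms(2,3) c z2] by simp
    thus "ps_eval n (Dx A) z = 0" using z1 by simp
  qed
qed




lemma claim3:
  assumes cR: "c \<in> conv_ps_rest n" and dR: "d \<in> conv_ps_rest n" and sp: "c - d \<in> Sp n ff"
  shows "c = d"
proof -
  define e where "e = c - d"
  have rest: "\<forall>\<alpha>. e \<alpha> \<noteq> 0 \<longrightarrow> \<alpha> 0 = 0 \<and> \<alpha> 1 = 0 \<and> \<alpha> 2 = 0"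
  proof (intro allI impI)
    fix \<alpha> assume "e \<alpha> \<noteq> 0"
    hence "c \<alpha> \<noteq> 0 \<or> d \<alpha> \<noteq> 0" by (auto simp: e_def)
    thus "\<alpha> 0 = 0 \<and> \<alpha> 1 = 0 \<and> \<alpha> 2 = 0" using cR dR unfolding conv_ps_rest_def by blast
  qed
  have eSp: "e \<in> Sp n ff" using sp unfolding e_def .
  hence "e \<in> Fr n ff" unfolding Sp_def by auto
  hence ec: "e \<in> conv_ps n" unfolding Fr_def by auto
  obtain re where re: "re > 0" "psr n e re" using conv_ps_psr[OF ec] by blast
  obtain \<beta> \<epsilon> where bc: "\<beta> \<in> conv_ps n" and eps: "\<epsilon> > 0" and
    D: "\<forall>z. polydisc n \<epsilon> z \<longrightarrow> ff z \<noteq> 0 \<longrightarrow>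
      ((\<lambda>t. ps_eval n \<beta> (z(0 := t)) / (z 2 - t * z 1)) has_field_derivative (ps_eval n e z / ff z)) (at (z 0))"
    using eSp unfolding Sp_def by blast
  obtain rb where rb: "rb > 0" "psr n \<beta> rb" using conv_ps_psr[OF bc] by blast
  define Sb where "Sb = (\<Sum>\<^sub>\<infinity>\<alpha>\<in>multi_idx n. norm (\<beta> \<alpha>) * rb ^ dg n \<alpha>)"
  have Sb0: "Sb \<ge> 0" unfolding Sb_def by (rule infsum_nonneg) (use rb in auto)
  define \<delta> where "\<delta> = min \<epsilon> (min (rb/2) re)"
  have dpos: "\<delta> > 0" unfolding \<delta>_def using eps rb re by simp
  have dle: "\<delta> \<le> \<epsilon>" "\<delta> \<le> rb/2" "\<delta> \<le> re" unfolding \<delta>_def by auto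
  have key: "ps_eval n e z = 0" if z: "\<forall>i\<le>n. norm (z i) < \<delta>" for z
  proof (rule ccontr)
    define E where "E = ps_eval n e z"
    assume "ps_eval n e z \<noteq> 0"
    hence Enz: "E \<noteq> 0" unfolding E_def .
    define X where "X = \<delta> * norm E"
    have Xpos: "X > 0" unfolding X_def using dpos Enz by simp
    define s where "s = min (\<delta>/2) (X / (8 * Sb + 1))"
    have spos: "s > 0" unfolding s_def using dpos Xpos Sb0 by simp
    have sd: "s < \<delta>" unfolding s_def using dpos by simp
    have sX: "s * (8 * Sb + 1) \<le> X"
    proof -
      have "s \<le> X / (8 * Sb + 1)" unfolding s_def by simp
      thus ?thesis using Sb0 by (simp add: pos_le_divide_eq)
    qed
    define w0 where "w0 = z(1 := 0, 2 := complex_of_real s)"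
    have wc: "\<forall>i\<le>n. norm ((w0(0:=t)) i) < \<delta>" if "norm t < \<delta>" for t
    proof (intro allI impI)
      fix i assume "i \<le> n"
      show "norm ((w0(0:=t)) i) < \<delta>"
        using that spos sd dpos z \<open>i \<le> n\<close> unfolding w0_def by (cases "i = 0 \<or> i = 1 \<or> i = 2") auto
    qed
    have Ew: "ps_eval n e (w0(0:=t)) = E" for t
      unfolding E_def by (rule IND[OF rest]) (auto simp: w0_def)
    define Bf where "Bf = (\<lambda>\<tau>. ps_eval n \<beta> (w0(0:=\<tau>)))"
    have Bd: "(Bf has_field_derivative (E / complex_of_real s)) (at t)" if t: "norm t < \<delta>" for t
    proof -
      define w where "w = w0(0:=t)"
      have pd: "polydisc n \<epsilon> w" using wc[OF t] unfolding polydisc_def w_def \<delta>_def by force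
      have w1: "w 1 = 0" and w2: "w 2 = complex_of_real s" and w0t: "w 0 = t" unfolding w_def w0_def by auto
      have ffw: "ff w = (complex_of_real s)^2" unfolding ff_def w1 w2 by simp
      have ffnz: "ff w \<noteq> 0" unfolding ffw using spos by simp
      have D1: "((\<lambda>\<tau>. Bf \<tau> / complex_of_real s) has_field_derivative (E / (complex_of_real s)^2)) (at t)"
      proof -
        have "((\<lambda>\<tau>. ps_eval n \<beta> (w(0:=\<tau>)) / (w 2 - \<tau> * w 1)) has_field_derivative (ps_eval n e w / ff w)) (at (w 0))"
          using D pd ffnz by blast
        hence "((\<lambda>\<tau>. ps_eval n \<beta> (w(0:=\<tau>)) / complex_of_real s) has_field_derivative (ps_eval n e w / (complex_of_real s)^2)) (at t)"
          unfolding w1 w2 w0t ffw by simp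
        moreover have "\<And>\<tau>. w(0:=\<tau>) = w0(0:=\<tau>)" unfolding w_def by simp
        moreover have "ps_eval n e w = E" unfolding w_def by (rule Ew)
        ultimately show ?thesis unfolding Bf_def by simp
      qed
      have c2: "\<forall>i\<le>n. norm (w i) < rb/2" using wc[OF t] unfolding w_def \<delta>_def by force
      have D2: "(Bf has_field_derivative ps_eval n (Dx \<beta>) w) (at t)"
        using DL[OF rb(2) rb(1) c2] unfolding Bf_def w_def by (simp only: fun_upd_upd fun_upd_same)
      have "ps_eval n (Dx \<beta>) w / complex_of_real s = E / (complex_of_real s)^2"
        using DERIV_unique[OF DERIV_cdivide[OF D2] D1] .
      hence "ps_eval n (Dx \<beta>) w = E / complex_of_real s" using spos by (simp add: field_simps power2_eq_square)
      with D2 show ?thesis by simp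
    qed
    define G where "G = (\<lambda>\<tau>. Bf \<tau> - \<tau> * (E / complex_of_real s))"
    have Gd: "(G has_field_derivative 0) (at t within ball 0 \<delta>)" if "t \<in> ball 0 \<delta>" for t
    proof -
      have "norm t < \<delta>" using that by simp
      have "(G has_field_derivative (E / complex_of_real s - 1 * (E / complex_of_real s))) (at t)"
        unfolding G_def by (intro DERIV_diff Bd[OF \<open>norm t < \<delta>\<close>] DERIV_cmult_right DERIV_ident)
      thus ?thesis by (simp add: has_field_derivative_at_within)
    qed
    obtain C where C: "\<forall>x\<in>ball 0 \<delta>. G x = C"
      using has_field_derivative_zero_constant[OF convex_ball Gd] by blast
    define t1 where "t1 = complex_of_real (\<delta>/2)"
    have t1b: "t1 \<in> ball 0 \<delta>" unfolding t1_def using dpos by simp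
    have 0: "0 \<in> ball (0::complex) \<delta>" using dpos by simp
    have "G t1 = G 0" using C t1b 0 by simp
    hence diff: "Bf t1 - Bf 0 = t1 * (E / complex_of_real s)" unfolding G_def by (simp add: algebra_simps)
    have bnd: "norm (Bf \<tau>) \<le> Sb" if "norm \<tau> < \<delta>" for \<tau>
    proof -
      have "\<forall>i\<le>n. norm ((w0(0:=\<tau>)) i) \<le> rb"
      proof (intro allI impI)
        fix i assume "i \<le> n"
        hence "norm ((w0(0:=\<tau>)) i) < \<delta>" using wc[OF that] by blast
        thus "norm ((w0(0:=\<tau>)) i) \<le> rb" using dle rb by linarith
      qed
      from psr_bound[OF rb(2) this] show ?thesis unfolding Bf_def Sb_def .
    qed
    have "norm (t1 * (E / complex_of_real s)) \<le> norm (Bf t1) + norm (Bf 0)"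
      unfolding diff[symmetric] by (rule norm_triangle_ineq4)
    also have "\<dots> \<le> 2 * Sb" using bnd[of t1] bnd[of 0] t1b dpos by simp
    finally have "(\<delta>/2) * norm E / s \<le> 2 * Sb"
      unfolding t1_def using dpos spos by (simp add: norm_mult norm_divide)
    hence "(\<delta>/2) * norm E \<le> 2 * Sb * s" using spos by (simp add: pos_divide_le_eq)
    hence X4: "X \<le> 4 * (Sb * s)" unfolding X_def by simp
    have "Sb * s \<ge> 0" using Sb0 spos by simp
    thus False using X4 sX spos by (simp add: algebra_simps)
  qed
  have zero: "\<forall>\<alpha>\<in>multi_idx n. e \<alpha> = 0"
  proof (rule IT[OF dpos], intro allI impI)
    fix z :: "nat \<Rightarrow> complex" assume z: "\<forall>i\<le>n. 0 < norm (z i) \<and> norm (z i) < \<delta>"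
    have "\<forall>i\<le>n. norm (z i) \<le> re" using z dle by (meson less_imp_le order.strict_trans2)
    from psr_has_sum[OF re(2) this] key[of z] z
    show "((\<lambda>\<alpha>. e \<alpha> * monomial_val n \<alpha> z) has_sum 0) (multi_idx n)" by simp
  qed
  have "\<forall>\<alpha>. e \<alpha> = 0"
    using zero ec unfolding conv_ps_iff by blast
  thus ?thesis unfolding e_def by (auto simp: fun_eq_iff)
qed




lemma dg_Suc_upd:
  assumes "\<beta> \<in> multi_idx n"
  shows "dg (Suc n) (\<beta>(Suc n := j)) = dg n \<beta> + j"
proof -
  have "dg (Suc n) (\<beta>(Suc n := j)) = (\<Sum>i\<le>n. (\<beta>(Suc n := j)) i) + j"
    unfolding dg_def by simp
  also have "(\<Sum>i\<le>n. (\<beta>(Suc n := j)) i) = dg n \<beta>" unfolding dg_def by (rule sum.cong) auto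
  finally show ?thesis .
qed

lemma geom_half: "((\<lambda>j. (1/2::real) ^ j) has_sum 2) UNIV"
proof -
  have "(\<lambda>j. (1/2::real) ^ j) sums (1 / (1 - 1/2))" by (rule geometric_sums) simp
  hence "(\<lambda>j. (1/2::real) ^ j) sums 2" by simp
  thus ?thesis by (rule sums_nonneg_imp_has_sum) simp
qed

lemma GS: "(\<lambda>\<alpha>. (1/2::real) ^ dg n \<alpha>) summable_on multi_idx n"
proof (induction n)
  case 0
  have bij: "bij_betw (\<lambda>j::nat. (\<lambda>_. 0::nat)(0 := j)) UNIV (multi_idx 0)"
    by (rule bij_betwI[where g="\<lambda>\<alpha>. \<alpha> 0"]) (auto simp: multi_idx_def fun_eq_iff)
  have "(\<lambda>j. (1/2::real) ^ dg 0 ((\<lambda>_. 0::nat)(0 := j))) summable_on UNIV"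
    using geom_half by (simp add: dg_def summable_on_def) (blast)
  thus ?case using summable_on_reindex_bij_betw[OF bij] by blast
next
  case (Suc n)
  have bij: "bij_betw (\<lambda>(\<beta>, j). \<beta>(Suc n := j)) (Sigma (multi_idx n) (\<lambda>_. UNIV)) (multi_idx (Suc n))"
    by (rule bij_betwI[where g="\<lambda>\<alpha>. (\<alpha>(Suc n := 0), \<alpha> (Suc n))"]) (auto simp: multi_idx_def fun_eq_iff)
  have "(\<lambda>(\<beta>, j). (1/2::real) ^ (dg n \<beta> + j)) summable_on Sigma (multi_idx n) (\<lambda>_. UNIV)"
  proof (rule summable_on_SigmaI)
    fix \<beta> show "((\<lambda>j. (\<lambda>(\<beta>, j). (1/2::real) ^ (dg n \<beta> + j)) (\<beta>, j)) has_sum ((1/2) ^ dg n \<beta> * 2)) UNIV"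
      using has_sum_cmult_right[OF geom_half, of "(1/2) ^ dg n \<beta>"] by (simp add: power_add)
  next
    show "(\<lambda>\<beta>. (1/2::real) ^ dg n \<beta> * 2) summable_on multi_idx n"
      using summable_on_cmult_left[OF Suc.IH] .
  qed auto
  moreover have "(\<lambda>(\<beta>, j). (1/2::real) ^ dg (Suc n) (\<beta>(Suc n := j))) summable_on Sigma (multi_idx n) (\<lambda>_. UNIV)
      \<longleftrightarrow> (\<lambda>(\<beta>, j). (1/2::real) ^ (dg n \<beta> + j)) summable_on Sigma (multi_idx n) (\<lambda>_. UNIV)"
    by (rule summable_on_cong) (auto simp: dg_Suc_upd)
  ultimately have "(\<lambda>x. (1/2::real) ^ dg (Suc n) ((\<lambda>(\<beta>, j). \<beta>(Suc n := j)) x)) summable_on Sigma (multi_idx n) (\<lambda>_. UNIV)"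
    by (simp add: case_prod_unfold)
  thus ?case using summable_on_reindex_bij_betw[OF bij] by blast
qed

definition ix :: "(nat \<Rightarrow> nat) \<Rightarrow> nat \<Rightarrow> nat \<Rightarrow> nat \<Rightarrow> nat \<Rightarrow> nat" where
  "ix \<alpha> k a b = \<alpha>(0 := k, 1 := a, 2 := b)"

lemma ix_apply[simp]: "ix \<alpha> k a b 0 = k" "ix \<alpha> k a b (Suc 0) = a" "ix \<alpha> k a b 2 = b"
  "i \<noteq> 0 \<Longrightarrow> i \<noteq> 1 \<Longrightarrow> i \<noteq> 2 \<Longrightarrow> ix \<alpha> k a b i = \<alpha> i"
  unfolding ix_def by auto

lemma ix_ix[simp]: "ix (ix \<alpha> k a b) k' a' b' = ix \<alpha> k' a' b'"
  unfolding ix_def by (auto simp: fun_eq_iff)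

lemma ix_self: "ix \<alpha> (\<alpha> 0) (\<alpha> 1) (\<alpha> 2) = \<alpha>"
  unfolding ix_def by (auto simp: fun_eq_iff)

lemma upd_ix: "\<alpha>(0 := x) = ix \<alpha> x (\<alpha> 1) (\<alpha> 2)" "\<alpha>(1 := x) = ix \<alpha> (\<alpha> 0) x (\<alpha> 2)"
  "\<alpha>(2 := x) = ix \<alpha> (\<alpha> 0) (\<alpha> 1) x"
  unfolding ix_def by (auto simp: fun_eq_iff)

lemma ix_M: "\<alpha> \<in> multi_idx n \<Longrightarrow> 2 \<le> n \<Longrightarrow> ix \<alpha> k a b \<in> multi_idx n"
  unfolding ix_def multi_idx_def by auto

lemma ix_dg: assumes "2 \<le> n"
  shows "dg n (ix \<alpha> k a b) + (\<alpha> 0 + \<alpha> 1 + \<alpha> 2) = dg n \<alpha> + (k + a + b)"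
proof -
  have 1: "dg n (\<alpha>(0:=k)) + \<alpha> 0 = dg n \<alpha> + k" by (rule dg_upd) simp
  have 2: "dg n (\<alpha>(0:=k, 1:=a)) + (\<alpha>(0:=k)) 1 = dg n (\<alpha>(0:=k)) + a" by (rule dg_upd) (use assms in simp)
  have 3: "dg n (\<alpha>(0:=k, 1:=a, 2:=b)) + (\<alpha>(0:=k, 1:=a)) 2 = dg n (\<alpha>(0:=k, 1:=a)) + b" by (rule dg_upd) (use assms in simp)
  show ?thesis using 1 2 3 unfolding ix_def by simp
qed

definition mulvar :: "nat \<Rightarrow> ((nat \<Rightarrow> nat) \<Rightarrow> complex) \<Rightarrow> (nat \<Rightarrow> nat) \<Rightarrow> complex" where
  "mulvar i P \<alpha> = (if 1 \<le> \<alpha> i then P (\<alpha>(i := \<alpha> i - 1)) else 0)"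

lemma mono_incr:
  assumes "i \<le> n"
  shows "monomial_val n (\<alpha>(i := \<alpha> i + 1)) z = z i * monomial_val n \<alpha> z"
proof -
  have A: "monomial_val n (\<alpha>(i := \<alpha> i + 1)) z = z i ^ (\<alpha> i + 1) * (\<Prod>j\<in>{..n}-{i}. z j ^ \<alpha> j)"
    using mono_upd[OF assms, of "\<alpha>(i := \<alpha> i + 1)" z "z i"] by (simp add: fun_upd_idem_iff)
  have B: "monomial_val n \<alpha> z = z i ^ \<alpha> i * (\<Prod>j\<in>{..n}-{i}. z j ^ \<alpha> j)"
    using mono_upd[OF assms, of \<alpha> z "z i"] by simp
  show ?thesis unfolding A B by (simp add: power_add mult_ac)
qed

lemma mulvar_hs:
  assumes "i \<le> n" "((\<lambda>\<alpha>. P \<alpha> * monomial_val n \<alpha> z) has_sum S) (multi_idx n)"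
  shows "((\<lambda>\<alpha>. mulvar i P \<alpha> * monomial_val n \<alpha> z) has_sum (z i * S)) (multi_idx n)"
proof -
  let ?M = "multi_idx n"
  let ?h = "\<lambda>\<alpha>::nat\<Rightarrow>nat. \<alpha>(i := \<alpha> i + 1)"
  let ?g = "\<lambda>\<alpha>. mulvar i P \<alpha> * monomial_val n \<alpha> z"
  have inj: "inj_on ?h ?M"
  proof (rule inj_onI)
    fix a b assume "?h a = ?h b"
    hence "a i = b i" "\<And>j. j \<noteq> i \<Longrightarrow> a j = b j"
      by (metis add_right_cancel fun_upd_same, metis fun_upd_other)
    thus "a = b" by (metis ext)
  qed
  have eqf: "?g \<circ> ?h = (\<lambda>\<alpha>. z i * (P \<alpha> * monomial_val n \<alpha> z))"
  proof (rule ext)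
    fix \<alpha>
    have "mulvar i P (?h \<alpha>) = P \<alpha>" unfolding mulvar_def by simp
    thus "(?g \<circ> ?h) \<alpha> = z i * (P \<alpha> * monomial_val n \<alpha> z)"
      unfolding o_def mono_incr[OF assms(1)] by simp
  qed
  have "((?g \<circ> ?h) has_sum (z i * S)) ?M" unfolding eqf by (rule has_sum_cmult_right[OF assms(2)])
  hence h1: "(?g has_sum (z i * S)) (?h ` ?M)" using has_sum_reindex[OF inj] by blast
  have img: "?h ` ?M = {\<alpha>\<in>?M. 1 \<le> \<alpha> i}"
  proof
    show "?h ` ?M \<subseteq> {\<alpha>\<in>?M. 1 \<le> \<alpha> i}" using assms(1) by (auto intro: multi_idx_upd)
    show "{\<alpha>\<in>?M. 1 \<le> \<alpha> i} \<subseteq> ?h ` ?M"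
    proof
      fix \<alpha> assume a: "\<alpha> \<in> {\<alpha>\<in>?M. 1 \<le> \<alpha> i}"
      hence "\<alpha> = ?h (\<alpha>(i := \<alpha> i - 1))" by (auto simp: fun_eq_iff)
      moreover have "\<alpha>(i := \<alpha> i - 1) \<in> ?M" using a assms(1) by (auto intro: multi_idx_upd)
      ultimately show "\<alpha> \<in> ?h ` ?M" by blast
    qed
  qed
  show ?thesis
    using h1 unfolding img by (subst (asm) has_sum_cong_neutral[of _ _ ?g]) (auto simp: mulvar_def)
qed




lemma mono_split:
  assumes "2 \<le> n"
  shows "monomial_val n \<alpha> z = z 0 ^ \<alpha> 0 * z 1 ^ \<alpha> 1 * z 2 ^ \<alpha> 2 * (\<Prod>i\<in>{3..n}. z i ^ \<alpha> i)"
proof -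
  have e: "{..n} = insert 0 (insert 1 (insert 2 {3..n}))" using assms by auto
  show ?thesis unfolding monomial_val_def e by (simp add: mult_ac)
qed

definition sig :: "(nat \<Rightarrow> nat) \<Rightarrow> nat \<Rightarrow> nat" where
  "sig \<alpha> = ix \<alpha> (\<alpha> 0 + \<alpha> 2) (\<alpha> 1 + \<alpha> 2) 0"

lemma mono_sig:
  assumes "2 \<le> n"
  shows "monomial_val n \<alpha> (w(2 := w 0 * w 1)) = monomial_val n (sig \<alpha>) w"
proof -
  have R: "(\<Prod>i\<in>{3..n}. (w(2 := w 0 * w 1)) i ^ \<alpha> i) = (\<Prod>i\<in>{3..n}. w i ^ sig \<alpha> i)"
    by (rule prod.cong) (auto simp: sig_def)
  show ?thesis unfolding mono_split[OF assms, of \<alpha>] mono_split[OF assms, of "sig \<alpha>"] R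
    by (simp add: sig_def power_add power_mult_distrib mult_ac)
qed

definition lev :: "((nat \<Rightarrow> nat) \<Rightarrow> complex) \<Rightarrow> (nat \<Rightarrow> nat) \<Rightarrow> complex" where
  "lev D \<beta> = (if \<beta> 2 = 0 then (\<Sum>b\<le>min (\<beta> 0) (\<beta> 1). D (ix \<beta> (\<beta> 0 - b) (\<beta> 1 - b) b)) else 0)"

lemma fiber:
  assumes "2 \<le> n" "\<beta> \<in> multi_idx n" "\<beta> 2 = 0"
  shows "{\<alpha>\<in>multi_idx n. sig \<alpha> = \<beta>} = (\<lambda>b. ix \<beta> (\<beta> 0 - b) (\<beta> 1 - b) b) ` {..min (\<beta> 0) (\<beta> 1)}"
proof
  show "{\<alpha>\<in>multi_idx n. sig \<alpha> = \<beta>} \<subseteq> (\<lambda>b. ix \<beta> (\<beta> 0 - b) (\<beta> 1 - b) b) ` {..min (\<beta> 0) (\<beta> 1)}"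
  proof
    fix \<alpha> assume a: "\<alpha> \<in> {\<alpha>\<in>multi_idx n. sig \<alpha> = \<beta>}"
    hence s: "sig \<alpha> = \<beta>" by simp
    have b0: "\<beta> 0 = \<alpha> 0 + \<alpha> 2" and b1: "\<beta> 1 = \<alpha> 1 + \<alpha> 2" using s unfolding sig_def by auto
    have bo: "\<beta> i = \<alpha> i" if "i \<noteq> 0" "i \<noteq> 1" "i \<noteq> 2" for i
      using s that unfolding sig_def by auto
    have "\<alpha> = ix \<beta> (\<beta> 0 - \<alpha> 2) (\<beta> 1 - \<alpha> 2) (\<alpha> 2)"
    proof (rule ext)
      fix i show "\<alpha> i = ix \<beta> (\<beta> 0 - \<alpha> 2) (\<beta> 1 - \<alpha> 2) (\<alpha> 2) i"
        using b0 b1 bo[of i] by (cases "i = 0 \<or> i = 1 \<or> i = 2") auto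
    qed
    moreover have "\<alpha> 2 \<in> {..min (\<beta> 0) (\<beta> 1)}" using b0 b1 by simp
    ultimately show "\<alpha> \<in> (\<lambda>b. ix \<beta> (\<beta> 0 - b) (\<beta> 1 - b) b) ` {..min (\<beta> 0) (\<beta> 1)}" by blast
  qed
  show "(\<lambda>b. ix \<beta> (\<beta> 0 - b) (\<beta> 1 - b) b) ` {..min (\<beta> 0) (\<beta> 1)} \<subseteq> {\<alpha>\<in>multi_idx n. sig \<alpha> = \<beta>}"
  proof
    fix \<alpha> assume "\<alpha> \<in> (\<lambda>b. ix \<beta> (\<beta> 0 - b) (\<beta> 1 - b) b) ` {..min (\<beta> 0) (\<beta> 1)}"
    then obtain b where b: "b \<le> min (\<beta> 0) (\<beta> 1)" and a: "\<alpha> = ix \<beta> (\<beta> 0 - b) (\<beta> 1 - b) b" by auto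
    have "\<alpha> \<in> multi_idx n" unfolding a by (rule ix_M[OF assms(2,1)])
    moreover have "sig \<alpha> = ix \<beta> (\<beta> 0) (\<beta> 1) (\<beta> 2)" unfolding a sig_def using b assms(3) by simp
    ultimately show "\<alpha> \<in> {\<alpha>\<in>multi_idx n. sig \<alpha> = \<beta>}" using ix_self[of \<beta>] by simp
  qed
qed

lemma fiber_empty:
  assumes "2 \<le> n" "\<beta> \<notin> multi_idx n \<or> \<beta> 2 \<noteq> 0"
  shows "{\<alpha>\<in>multi_idx n. sig \<alpha> = \<beta>} = {}"
  using assms ix_M[OF _ assms(1)] unfolding sig_def by auto

lemma LG:
  assumes n: "2 \<le> n"
    and hs: "(\<lambda>\<alpha>. D \<alpha> * monomial_val n \<alpha> (w(2 := w 0 * w 1))) summable_on multi_idx n"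
  shows "((\<lambda>\<beta>. lev D \<beta> * monomial_val n \<beta> w) has_sum ps_eval n D (w(2 := w 0 * w 1))) (multi_idx n)"
proof -
  let ?M = "multi_idx n"
  let ?g = "\<lambda>\<alpha>. D \<alpha> * monomial_val n \<alpha> (w(2 := w 0 * w 1))"
  have G: "((\<lambda>\<beta>. \<Sum>\<^sub>\<infinity>\<alpha>\<in>{\<alpha>\<in>?M. sig \<alpha> = \<beta>}. ?g \<alpha>) has_sum ps_eval n D (w(2 := w 0 * w 1))) UNIV"
    unfolding ps_eval_def by (rule group_has_sum(1)[OF hs])
  have inner: "(\<Sum>\<^sub>\<infinity>\<alpha>\<in>{\<alpha>\<in>?M. sig \<alpha> = \<beta>}. ?g \<alpha>) = (if \<beta> \<in> ?M then lev D \<beta> * monomial_val n \<beta> w else 0)" for \<beta>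
  proof (cases "\<beta> \<in> ?M \<and> \<beta> 2 = 0")
    case True
    let ?p = "\<lambda>b. ix \<beta> (\<beta> 0 - b) (\<beta> 1 - b) b"
    have inj: "inj_on ?p {..min (\<beta> 0) (\<beta> 1)}"
    proof (rule inj_onI)
      fix x y assume "?p x = ?p y"
      hence "?p x 2 = ?p y 2" by simp
      thus "x = y" by simp
    qed
    have "(\<Sum>\<^sub>\<infinity>\<alpha>\<in>{\<alpha>\<in>?M. sig \<alpha> = \<beta>}. ?g \<alpha>) = (\<Sum>\<alpha>\<in>?p ` {..min (\<beta> 0) (\<beta> 1)}. ?g \<alpha>)"
      unfolding fiber[OF n _ _, of \<beta>, OF conjunct1[OF True] conjunct2[OF True]] by simp
    also have "\<dots> = (\<Sum>b\<le>min (\<beta> 0) (\<beta> 1). ?g (?p b))" by (rule sum.reindex[OF inj, unfolded o_def])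
    also have "\<dots> = (\<Sum>b\<le>min (\<beta> 0) (\<beta> 1). D (?p b) * monomial_val n \<beta> w)"
    proof (rule sum.cong)
      fix b assume b: "b \<in> {..min (\<beta> 0) (\<beta> 1)}"
      have "sig (?p b) = ix \<beta> (\<beta> 0) (\<beta> 1) (\<beta> 2)" unfolding sig_def using b True by simp
      hence "sig (?p b) = \<beta>" using ix_self[of \<beta>] by simp
      thus "?g (?p b) = D (?p b) * monomial_val n \<beta> w" unfolding mono_sig[OF n] by simp
    qed simp
    also have "\<dots> = lev D \<beta> * monomial_val n \<beta> w" unfolding lev_def using True by (simp add: sum_distrib_right)
    finally show ?thesis using True by simp
  next
    case False
    have e: "{\<alpha>\<in>?M. sig \<alpha> = \<beta>} = {}" by (rule fiber_empty[OF n]) (use False in auto)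
    have "(\<Sum>\<^sub>\<infinity>\<alpha>\<in>{\<alpha>\<in>?M. sig \<alpha> = \<beta>}. ?g \<alpha>) = 0" unfolding e by simp
    moreover have "(if \<beta> \<in> ?M then lev D \<beta> * monomial_val n \<beta> w else 0) = 0" using False unfolding lev_def by auto
    ultimately show ?thesis by simp
  qed
  have "((\<lambda>\<beta>. if \<beta> \<in> ?M then lev D \<beta> * monomial_val n \<beta> w else 0) has_sum ps_eval n D (w(2 := w 0 * w 1))) UNIV"
    using G unfolding inner .
  thus ?thesis by (subst (asm) has_sum_cong_neutral[where T="?M" and g="\<lambda>\<beta>. lev D \<beta> * monomial_val n \<beta> w"]) auto
qed

lemma FRC:
  assumes n: "2 \<le> n" and AF: "A \<in> Fr n ff"
  shows "\<forall>\<beta>\<in>multi_idx n. lev (Dx A) \<beta> = 0"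
proof -
  have Ac: "A \<in> conv_ps n" using AF unfolding Fr_def by auto
  obtain r where r: "r > 0" "psr n A r" using conv_ps_psr[OF Ac] by blast
  obtain \<epsilon> where e: "\<epsilon> > 0" and H: "\<forall>z. (\<forall>i\<le>n. norm (z i) < \<epsilon>) \<longrightarrow> z 2 = z 0 * z 1 \<longrightarrow> z 1 \<noteq> 0 \<longrightarrow> ps_eval n (Dx A) z = 0"
    using Fr_D[OF AF r(2) r(1)] by blast
  have pD: "psr n (Dx A) (r/2)" by (rule psr_Dx[OF r(2,1)])
  define \<delta> where "\<delta> = min (min \<epsilon> (r/2)) 1"
  have dpos: "\<delta> > 0" unfolding \<delta>_def using e r by simp
  have dle: "\<delta> \<le> \<epsilon>" "\<delta> \<le> r/2" "\<delta> \<le> 1" unfolding \<delta>_def by auto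
  show ?thesis
  proof (rule IT[OF dpos], intro allI impI)
    fix w :: "nat \<Rightarrow> complex" assume w: "\<forall>i\<le>n. 0 < norm (w i) \<and> norm (w i) < \<delta>"
    define z where "z = w(2 := w 0 * w 1)"
    have w01: "norm (w 0) < \<delta>" "norm (w 1) < \<delta>" "w 1 \<noteq> 0" using w n by auto
    have "norm (w 0 * w 1) < \<delta>"
    proof -
      have "norm (w 0 * w 1) = norm (w 0) * norm (w 1)" by (simp add: norm_mult)
      also have "\<dots> \<le> norm (w 0) * 1" using w01 dle by (intro mult_left_mono) auto
      finally show ?thesis using w01 by simp
    qed
    hence zc: "\<forall>i\<le>n. norm (z i) < \<delta>" unfolding z_def using w by auto
    have z2: "z 2 = z 0 * z 1" and z1: "z 1 \<noteq> 0" unfolding z_def using w01 by auto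
    have "ps_eval n (Dx A) z = 0"
      using H zc z2 z1 dle by (meson order.strict_trans2)
    moreover have "(\<lambda>\<alpha>. Dx A \<alpha> * monomial_val n \<alpha> z) summable_on multi_idx n"
      by (rule psr_summable[OF pD]) (use zc dle in \<open>meson less_imp_le order.strict_trans2\<close>)
    ultimately show "((\<lambda>\<alpha>. lev (Dx A) \<alpha> * monomial_val n \<alpha> w) has_sum 0) (multi_idx n)"
      using LG[OF n, of "Dx A" w] unfolding z_def by simp
  qed
qed




definition cc :: "((nat \<Rightarrow> nat) \<Rightarrow> complex) \<Rightarrow> (nat \<Rightarrow> nat) \<Rightarrow> complex" where
  "cc A \<alpha> = (if \<alpha> 0 = 0 \<and> \<alpha> 1 = 0 \<and> \<alpha> 2 = 0 then A \<alpha> else 0)"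

definition bsum :: "((nat \<Rightarrow> nat) \<Rightarrow> complex) \<Rightarrow> (nat \<Rightarrow> nat) \<Rightarrow> nat \<Rightarrow> nat \<Rightarrow> nat \<Rightarrow> nat \<Rightarrow> complex" where
  "bsum A \<alpha> k a b m = (\<Sum>b'<m. of_nat (k + b - b') * A (ix \<alpha> (k + b - b') (a + b - b') b'))"

definition bb :: "nat \<Rightarrow> ((nat \<Rightarrow> nat) \<Rightarrow> complex) \<Rightarrow> (nat \<Rightarrow> nat) \<Rightarrow> complex" where
  "bb n A \<alpha> = (if \<alpha> \<notin> multi_idx n then 0
     else if \<alpha> 0 = 0 then A (ix \<alpha> 0 (\<alpha> 1 + 1) (\<alpha> 2))
     else if \<alpha> 0 = 1 then (if \<alpha> 1 = 0 then A (ix \<alpha> 0 0 (\<alpha> 2 + 1)) else 0)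
     else - (1 / (of_nat (\<alpha> 0) * of_nat (\<alpha> 0 - 1))) * bsum A \<alpha> (\<alpha> 0) (\<alpha> 1 + 1) (\<alpha> 2) (Suc (\<alpha> 2)))"

definition Lc :: "((nat \<Rightarrow> nat) \<Rightarrow> complex) \<Rightarrow> (nat \<Rightarrow> nat) \<Rightarrow> complex" where
  "Lc \<beta> \<alpha> = (if 1 \<le> \<alpha> 2 then of_nat (\<alpha> 0 + 1) * \<beta> (ix \<alpha> (\<alpha> 0 + 1) (\<alpha> 1) (\<alpha> 2 - 1)) else 0)
     + (if 1 \<le> \<alpha> 1 then (1 - of_nat (\<alpha> 0)) * \<beta> (ix \<alpha> (\<alpha> 0) (\<alpha> 1 - 1) (\<alpha> 2)) else 0)"

lemma upd_ix1: "\<alpha>(Suc 0 := x) = ix \<alpha> (\<alpha> 0) x (\<alpha> 2)"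
  unfolding ix_def by (auto simp: fun_eq_iff)

lemma ix_self_eq: "\<alpha> 0 = k \<Longrightarrow> \<alpha> 1 = a \<Longrightarrow> \<alpha> 2 = b \<Longrightarrow> ix \<alpha> k a b = \<alpha>"
  using ix_self[of \<alpha>] by simp

lemma Lc_mulvar: "Lc \<beta> \<alpha> = mulvar 2 (Dx \<beta>) \<alpha> - mulvar 0 (mulvar 1 (Dx \<beta>)) \<alpha> + mulvar 1 \<beta> \<alpha>"
proof -
  have e1: "mulvar 2 (Dx \<beta>) \<alpha> = (if 1 \<le> \<alpha> 2 then of_nat (\<alpha> 0 + 1) * \<beta> (ix \<alpha> (\<alpha> 0 + 1) (\<alpha> 1) (\<alpha> 2 - 1)) else 0)"
    unfolding mulvar_def Dx_def by (simp add: upd_ix upd_ix1)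
  have e2: "mulvar 0 (mulvar 1 (Dx \<beta>)) \<alpha> = (if 1 \<le> \<alpha> 1 then of_nat (\<alpha> 0) * \<beta> (ix \<alpha> (\<alpha> 0) (\<alpha> 1 - 1) (\<alpha> 2)) else 0)"
    unfolding mulvar_def Dx_def by (simp add: upd_ix upd_ix1)
  have e3: "mulvar 1 \<beta> \<alpha> = (if 1 \<le> \<alpha> 1 then \<beta> (ix \<alpha> (\<alpha> 0) (\<alpha> 1 - 1) (\<alpha> 2)) else 0)"
    unfolding mulvar_def by (simp add: upd_ix upd_ix1)
  show ?thesis unfolding Lc_def e1 e2 e3 by (simp add: algebra_simps)
qed

lemma fa: "(c::complex) \<noteq> 0 \<Longrightarrow> d \<noteq> 0 \<Longrightarrow> c * (- (1 / (c * d)) * X) = - (1/d) * X"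
  by (simp add: field_simps)

lemma T1:
  assumes n: "2 \<le> n" and aM: "\<alpha> \<in> multi_idx n" and k: "1 \<le> \<alpha> 0"
  shows "(if 1 \<le> \<alpha> 2 then of_nat (\<alpha> 0 + 1) * bb n A (ix \<alpha> (\<alpha> 0 + 1) (\<alpha> 1) (\<alpha> 2 - 1)) else 0)
     = - (1 / of_nat (\<alpha> 0)) * bsum A \<alpha> (\<alpha> 0) (\<alpha> 1) (\<alpha> 2) (\<alpha> 2)"
proof (cases "1 \<le> \<alpha> 2")
  case False
  hence z: "\<alpha> 2 = 0" by linarith
  hence e: "{..<\<alpha> 2} = {}" by (simp only: lessThan_0)
  show ?thesis using False unfolding bsum_def e by simp
next
  case True
  define k a b where "k = \<alpha> 0" "a = \<alpha> 1" "b = \<alpha> 2"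
  have kb: "1 \<le> k" "1 \<le> b" using k True unfolding k_a_b_def by auto
  let ?a' = "ix \<alpha> (k + 1) a (b - 1)"
  have a'M: "?a' \<in> multi_idx n" by (rule ix_M[OF aM n])
  have s: "bsum A ?a' (k+1) (a + 1) (b - 1) (Suc (b - 1)) = bsum A \<alpha> k a b b"
    unfolding bsum_def using kb by (intro sum.cong) auto
  have bv: "bb n A ?a' = - (1 / (of_nat (k+1) * of_nat k)) * bsum A \<alpha> k a b b"
    unfolding bb_def using a'M kb s by simp
  have "of_nat (k + 1) * bb n A ?a' = of_nat (k+1) * (- (1 / (of_nat (k+1) * of_nat k)) * bsum A \<alpha> k a b b)"
    unfolding bv ..
  also have "\<dots> = - (1 / of_nat k) * bsum A \<alpha> k a b b"
  proof (rule fa)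
    show "(of_nat (k + 1) :: complex) \<noteq> 0" using of_nat_neq_0[of k] by simp
    show "(of_nat k :: complex) \<noteq> 0" using kb by simp
  qed
  finally have "of_nat (k + 1) * bb n A ?a' = - (1 / of_nat k) * bsum A \<alpha> k a b b" .
  thus ?thesis using True unfolding k_a_b_def by simp
qed

lemma FRC_use:
  assumes n: "2 \<le> n" and aM: "\<alpha> \<in> multi_idx n" and k: "1 \<le> \<alpha> 0" and ak: "\<alpha> 1 = 0 \<or> \<alpha> 0 = 1"
    and F: "lev (Dx A) (ix \<alpha> (\<alpha> 0 - 1 + \<alpha> 2) (\<alpha> 1 + \<alpha> 2) 0) = 0"
  shows "bsum A \<alpha> (\<alpha> 0) (\<alpha> 1) (\<alpha> 2) (\<alpha> 2) + of_nat (\<alpha> 0) * A \<alpha> = 0"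
proof -
  define k a b where "k = \<alpha> 0" "a = \<alpha> 1" "b = \<alpha> 2"
  define \<beta> where "\<beta> = ix \<alpha> (k - 1 + b) (a + b) 0"
  have mn: "min (\<beta> 0) (\<beta> 1) = b" unfolding \<beta>_def using ak k unfolding k_a_b_def by auto
  have "lev (Dx A) \<beta> = (\<Sum>b'\<le>b. Dx A (ix \<beta> (\<beta> 0 - b') (\<beta> 1 - b') b'))"
    unfolding lev_def mn by (simp add: \<beta>_def)
  also have "\<dots> = (\<Sum>b'\<le>b. of_nat (k + b - b') * A (ix \<alpha> (k + b - b') (a + b - b') b'))"
  proof (rule sum.cong)
    fix b' assume "b' \<in> {..b}"
    hence "b' \<le> b" by simp
    hence e: "Suc (k - Suc 0 + b - b') = k + b - b'" using k unfolding k_a_b_def by auto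
    hence e2: "1 + (of_nat (k - Suc 0 + b - b') :: complex) = of_nat (k + b - b')" by (metis of_nat_Suc add.commute)
    show "Dx A (ix \<beta> (\<beta> 0 - b') (\<beta> 1 - b') b') = of_nat (k + b - b') * A (ix \<alpha> (k + b - b') (a + b - b') b')"
      unfolding Dx_def \<beta>_def by (simp add: upd_ix upd_ix1 e e2)
  qed simp
  also have "\<dots> = bsum A \<alpha> k a b b + of_nat k * A \<alpha>"
    unfolding bsum_def lessThan_Suc_atMost[symmetric] sum.lessThan_Suc
    by (simp add: k_a_b_def ix_self_eq)
  finally show ?thesis using F unfolding \<beta>_def k_a_b_def by simp
qed

lemma coeff_id:
  assumes n: "2 \<le> n" and aM: "\<alpha> \<in> multi_idx n" and FR: "\<forall>\<beta>\<in>multi_idx n. lev (Dx A) \<beta> = 0"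
  shows "Lc (bb n A) \<alpha> = A \<alpha> - cc A \<alpha>"
proof -
  define k a b where "k = \<alpha> 0" "a = \<alpha> 1" "b = \<alpha> 2"
  have Fa: "lev (Dx A) (ix \<alpha> (\<alpha> 0 - 1 + \<alpha> 2) (\<alpha> 1 + \<alpha> 2) 0) = 0" using FR ix_M[OF aM n] by blast
  show ?thesis
  proof (cases "k = 0")
    case True
    have t1: "(if 1 \<le> b then of_nat (k + 1) * bb n A (ix \<alpha> (k + 1) a (b - 1)) else 0) = (if 1 \<le> b \<and> a = 0 then A \<alpha> else 0)"
      using True ix_M[OF aM n] unfolding bb_def k_a_b_def by (auto simp: ix_self_eq)
    have t2: "(if 1 \<le> a then (1 - of_nat k) * bb n A (ix \<alpha> k (a - 1) b) else 0) = (if 1 \<le> a then A \<alpha> else 0)"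
      using True ix_M[OF aM n] unfolding bb_def k_a_b_def by (auto simp: ix_self_eq)
    have "Lc (bb n A) \<alpha> = (if 1 \<le> b \<and> a = 0 then A \<alpha> else 0) + (if 1 \<le> a then A \<alpha> else 0)"
      using t1 t2 unfolding Lc_def k_a_b_def by simp
    thus ?thesis using True unfolding cc_def k_a_b_def by auto
  next
    case False
    hence k1: "1 \<le> \<alpha> 0" unfolding k_a_b_def by simp
    have T: "(if 1 \<le> b then of_nat (k + 1) * bb n A (ix \<alpha> (k + 1) a (b - 1)) else 0)
       = - (1 / of_nat k) * bsum A \<alpha> k a b b" using T1[OF n aM k1] unfolding k_a_b_def .
    have ccz: "cc A \<alpha> = 0" using False unfolding cc_def k_a_b_def by simp
    show ?thesis
    proof (cases "a = 0 \<or> k = 1")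
      case True
      have U: "bsum A \<alpha> k a b b + of_nat k * A \<alpha> = 0" using FRC_use[OF n aM k1 _ Fa] True unfolding k_a_b_def by blast
      have V: "(if 1 \<le> a then (1 - of_nat k) * bb n A (ix \<alpha> k (a - 1) b) else 0) = (0::complex)"
        using True by auto
      have "Lc (bb n A) \<alpha> = - (1 / of_nat k) * bsum A \<alpha> k a b b"
        using T V unfolding Lc_def k_a_b_def by simp
      also have "\<dots> = A \<alpha>" using U False by (simp add: field_simps) (metis add.commute add_eq_0_iff)
      finally show ?thesis using ccz by simp
    next
      case False2: False
      hence ak: "1 \<le> a" "2 \<le> k" using False by auto
      let ?a' = "ix \<alpha> k (a - 1) b"
      have a'M: "?a' \<in> multi_idx n" by (rule ix_M[OF aM n])
      have s: "bsum A ?a' k (a - 1 + 1) b (Suc b) = bsum A \<alpha> k a b b + of_nat k * A \<alpha>"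
        unfolding bsum_def sum.lessThan_Suc using ak by (simp add: k_a_b_def ix_self_eq)
      have bbv: "bb n A ?a' = - (1 / (of_nat k * of_nat (k - 1))) * (bsum A \<alpha> k a b b + of_nat k * A \<alpha>)"
        unfolding bb_def using a'M ak s by simp
      have "Lc (bb n A) \<alpha> = - (1 / of_nat k) * bsum A \<alpha> k a b b + (1 - of_nat k) * bb n A ?a'"
        using T ak unfolding Lc_def k_a_b_def by simp
      also have "\<dots> = A \<alpha>"
      proof -
        have k0: "(of_nat k :: complex) \<noteq> 0" "(of_nat (k - 1) :: complex) \<noteq> 0" using ak by auto
        have km: "(of_nat (k - 1) :: complex) = of_nat k - 1" using ak by (simp add: of_nat_diff)
        show ?thesis unfolding bbv using k0 unfolding km by (simp add: field_simps)
      qed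
      finally show ?thesis using ccz by simp
    qed
  qed
qed




lemma dg012: "2 \<le> n \<Longrightarrow> \<alpha> 0 + \<alpha> 1 + \<alpha> 2 \<le> dg n \<alpha>"
  using ix_dg[of n \<alpha> 0 0 0] by simp

lemma sq_le_4pow: "(Suc d)^2 \<le> 4 ^ d"
proof (induction d)
  case 0 thus ?case by simp
next
  case (Suc d)
  have "Suc (Suc d) \<le> 2 * Suc d" by simp
  hence "(Suc (Suc d))^2 \<le> (2 * Suc d)^2" by (rule power_mono) simp
  also have "(2 * Suc d)^2 = 4 * (Suc d)^2" by (simp only: power_mult_distrib) simp
  finally have "(Suc (Suc d))^2 \<le> 4 * (Suc d)^2" .
  also have "\<dots> \<le> 4 * 4 ^ d" using Suc by simp
  finally show ?case by simp
qed

lemma div_le_self':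
  fixes x D :: real
  assumes "0 \<le> x" "1 \<le> D"
  shows "x / D \<le> x"
proof -
  have "x / D \<le> x / 1" by (rule divide_left_mono) (use assms in auto)
  thus ?thesis by simp
qed

lemma A_bound:
  assumes "psr n A \<rho>" "\<rho> > 0" "\<rho> \<le> 1" "\<gamma> \<in> multi_idx n" "dg n \<gamma> \<le> m"
  shows "norm (A \<gamma>) * \<rho> ^ m \<le> (\<Sum>\<^sub>\<infinity>\<alpha>\<in>multi_idx n. norm (A \<alpha>) * \<rho> ^ dg n \<alpha>)"
proof -
  have "\<rho> ^ m \<le> \<rho> ^ dg n \<gamma>" using assms by (intro power_decreasing) auto
  hence "norm (A \<gamma>) * \<rho> ^ m \<le> norm (A \<gamma>) * \<rho> ^ dg n \<gamma>" by (intro mult_left_mono) auto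
  also have "\<dots> \<le> (\<Sum>\<^sub>\<infinity>\<alpha>\<in>multi_idx n. norm (A \<alpha>) * \<rho> ^ dg n \<alpha>)" by (rule psr_coef_bound) (use assms in auto)
  finally show ?thesis .
qed

lemma bb_bound:
  assumes n: "2 \<le> n" and pA: "psr n A \<rho>" and \<rho>: "\<rho> > 0" "\<rho> \<le> 1" and aM: "\<alpha> \<in> multi_idx n"
  shows "norm (bb n A \<alpha>) * \<rho> ^ (2 * dg n \<alpha> + 1) \<le> real ((Suc (dg n \<alpha>))^2) * (\<Sum>\<^sub>\<infinity>\<alpha>\<in>multi_idx n. norm (A \<alpha>) * \<rho> ^ dg n \<alpha>)"
proof -
  define S where "S = (\<Sum>\<^sub>\<infinity>\<alpha>\<in>multi_idx n. norm (A \<alpha>) * \<rho> ^ dg n \<alpha>)"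
  define d where "d = dg n \<alpha>"
  define k a b where "k = \<alpha> 0" "a = \<alpha> 1" "b = \<alpha> 2"
  have S0: "S \<ge> 0" unfolding S_def by (rule infsum_nonneg) (use \<rho> in auto)
  have kab: "k + a + b \<le> d" unfolding k_a_b_def d_def by (rule dg012[OF n])
  have AB: "norm (A \<gamma>) * \<rho> ^ (2 * d + 1) \<le> S" if "\<gamma> \<in> multi_idx n" "dg n \<gamma> \<le> 2 * d + 1" for \<gamma>
    unfolding S_def by (rule A_bound[OF pA \<rho> that])
  have Sle: "S \<le> real ((Suc d)^2) * S" using S0 by (simp add: mult_le_cancel_right1)
  have main: "norm (bb n A \<alpha>) * \<rho> ^ (2 * d + 1) \<le> real ((Suc d)^2) * S"
  proof (cases "k = 0")
    case True
    let ?g = "ix \<alpha> 0 (a + 1) b"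
    have "dg n ?g + (k + a + b) = d + (0 + (a + 1) + b)" using ix_dg[OF n, of \<alpha> 0 "a+1" b] unfolding k_a_b_def d_def .
    hence "dg n ?g \<le> 2 * d + 1" using kab by linarith
    hence "norm (A ?g) * \<rho> ^ (2 * d + 1) \<le> S" by (intro AB ix_M[OF aM n])
    moreover have "bb n A \<alpha> = A ?g" unfolding bb_def k_a_b_def using aM True unfolding k_a_b_def by simp
    ultimately show ?thesis using Sle by simp
  next
    case False
    show ?thesis
    proof (cases "k = 1")
      case True
      show ?thesis
      proof (cases "a = 0")
        case True
        let ?g = "ix \<alpha> 0 0 (b + 1)"
        have "dg n ?g + (k + a + b) = d + (0 + 0 + (b + 1))" using ix_dg[OF n, of \<alpha> 0 0 "b+1"] unfolding k_a_b_def d_def .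
        hence "dg n ?g \<le> 2 * d + 1" using kab by linarith
        hence "norm (A ?g) * \<rho> ^ (2 * d + 1) \<le> S" by (intro AB ix_M[OF aM n])
        moreover have "bb n A \<alpha> = A ?g" unfolding bb_def using aM True \<open>k = 1\<close> unfolding k_a_b_def by simp
        ultimately show ?thesis using Sle by simp
      next
        case False
        have "bb n A \<alpha> = 0" unfolding bb_def using aM False \<open>k = 1\<close> unfolding k_a_b_def by simp
        thus ?thesis using S0 by simp
      qed
    next
      case False2: False
      hence k2: "2 \<le> k" using False by simp
      define g where "g b' = ix \<alpha> (k + b - b') (a + 1 + b - b') b'" for b'
      have bbv: "bb n A \<alpha> = - (1 / (of_nat k * of_nat (k - 1))) * (\<Sum>b'<Suc b. of_nat (k + b - b') * A (g b'))"
        unfolding bb_def bsum_def g_def using aM k2 unfolding k_a_b_def by simp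
      have h1: "1 \<le> real k" "1 \<le> real (k - 1)" using k2 by auto
      have "(1::real) * 1 \<le> real k * real (k - 1)" by (rule mult_mono[OF h1(1) h1(2)]) auto
      hence kk: "(1::real) \<le> real k * real (k - 1)" by (simp only: mult_1_left)
      have "norm (bb n A \<alpha>) \<le> norm (\<Sum>b'<Suc b. of_nat (k + b - b') * A (g b'))"
      proof -
        have "norm (bb n A \<alpha>) = norm (\<Sum>b'<Suc b. of_nat (k + b - b') * A (g b')) / (real k * real (k - 1))"
          unfolding bbv by (simp add: norm_mult norm_divide)
        also have "\<dots> \<le> norm (\<Sum>b'<Suc b. of_nat (k + b - b') * A (g b'))"
          by (rule div_le_self'[OF norm_ge_zero kk])
        finally show ?thesis .
      qed
      also have "\<dots> \<le> (\<Sum>b'<Suc b. real (k + b - b') * norm (A (g b')))"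
        by (rule order.trans[OF norm_sum], simp only: norm_mult norm_of_nat order_refl)
      finally have n1: "norm (bb n A \<alpha>) \<le> (\<Sum>b'<Suc b. real (k + b - b') * norm (A (g b')))" .
      have "norm (bb n A \<alpha>) * \<rho> ^ (2 * d + 1) \<le> (\<Sum>b'<Suc b. real (k + b - b') * norm (A (g b'))) * \<rho> ^ (2 * d + 1)"
        using n1 \<rho> by (intro mult_right_mono) auto
      also have "\<dots> = (\<Sum>b'<Suc b. real (k + b - b') * (norm (A (g b')) * \<rho> ^ (2 * d + 1)))"
        by (simp only: sum_distrib_right mult.assoc)
      also have "\<dots> \<le> (\<Sum>b'<Suc b. real (Suc d) * S)"
      proof (rule sum_mono)
        fix b' assume "b' \<in> {..<Suc b}"
        hence b': "b' \<le> b" by simp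
        have "dg n (g b') + (k + a + b) = d + ((k + b - b') + (a + 1 + b - b') + b')"
          using ix_dg[OF n, of \<alpha> "k + b - b'" "a + 1 + b - b'" b'] unfolding g_def k_a_b_def d_def .
        hence "dg n (g b') \<le> 2 * d + 1" using kab b' by linarith
        hence h: "norm (A (g b')) * \<rho> ^ (2 * d + 1) \<le> S" unfolding g_def by (intro AB ix_M[OF aM n])
        have "real (k + b - b') \<le> real (Suc d)" using kab by simp
        thus "real (k + b - b') * (norm (A (g b')) * \<rho> ^ (2 * d + 1)) \<le> real (Suc d) * S"
          using h S0 \<rho> by (intro mult_mono) auto
      qed
      also have "\<dots> = real (Suc b) * (real (Suc d) * S)" by simp
      also have "\<dots> \<le> real (Suc d) * (real (Suc d) * S)"
        using kab S0 by (intro mult_right_mono) auto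
      also have "\<dots> = real ((Suc d)^2) * S" by (simp add: power2_eq_square algebra_simps)
      finally show ?thesis .
    qed
  qed
  thus ?thesis unfolding d_def S_def .
qed




lemma bb_psr:
  assumes n: "2 \<le> n" and pA: "psr n A r0" and r0: "r0 > 0"
  shows "psr n (bb n A) ((min r0 1)^2 / 8)"
proof -
  define \<rho> where "\<rho> = min r0 1"
  have \<rho>: "\<rho> > 0" "\<rho> \<le> 1" unfolding \<rho>_def using r0 by auto
  have pA': "psr n A \<rho>" by (rule psr_mono[OF pA]) (use \<rho> in \<open>auto simp: \<rho>_def\<close>)
  define S where "S = (\<Sum>\<^sub>\<infinity>\<alpha>\<in>multi_idx n. norm (A \<alpha>) * \<rho> ^ dg n \<alpha>)"
  have S0: "S \<ge> 0" unfolding S_def by (rule infsum_nonneg) (use \<rho> in auto)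
  have G: "(\<lambda>\<alpha>. (S / \<rho>) * (1/2::real) ^ dg n \<alpha>) summable_on multi_idx n"
    by (rule summable_on_cmult_right[OF GS])
  show ?thesis unfolding psr_def \<rho>_def[symmetric]
  proof (rule summable_on_comparison_test[OF G])
    fix \<alpha> assume aM: "\<alpha> \<in> multi_idx n"
    define d where "d = dg n \<alpha>"
    have B: "norm (bb n A \<alpha>) * \<rho> ^ (2 * d + 1) \<le> real ((Suc d)^2) * S"
      using bb_bound[OF n pA' \<rho> aM] unfolding d_def S_def .
    have p1: "(\<rho>^2/8) ^ d = \<rho> ^ (2 * d) / 8 ^ d" by (simp add: power_divide power_mult)
    have p2: "\<rho> ^ (2 * d + 1) = \<rho> ^ (2 * d) * \<rho>" by simp
    have "norm (bb n A \<alpha>) * (\<rho>^2/8) ^ d = (norm (bb n A \<alpha>) * \<rho> ^ (2 * d + 1)) / (\<rho> * 8 ^ d)"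
      unfolding p1 p2 using \<rho> by simp
    also have "\<dots> \<le> (real ((Suc d)^2) * S) / (\<rho> * 8 ^ d)"
      using B \<rho> by (intro divide_right_mono) auto
    also have "\<dots> \<le> (4 ^ d * S) / (\<rho> * 8 ^ d)"
    proof -
      have "real ((Suc d)^2) \<le> 4 ^ d" using sq_le_4pow[of d] by (metis of_nat_le_iff of_nat_numeral of_nat_power)
      thus ?thesis using S0 \<rho> by (intro divide_right_mono mult_right_mono) auto
    qed
    also have "\<dots> = (S / \<rho>) * (1/2) ^ d"
    proof -
      have e8: "(8::real) ^ d = 4 ^ d * 2 ^ d" by (simp add: power_mult_distrib[symmetric])
      have "(4::real) ^ d \<noteq> 0" "(2::real) ^ d \<noteq> 0" by auto
      thus ?thesis unfolding e8 power_one_over using \<rho> by simp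
    qed
    finally show "norm (bb n A \<alpha>) * (\<rho>^2/8) ^ dg n \<alpha> \<le> (S / \<rho>) * (1/2) ^ dg n \<alpha>" unfolding d_def .
  qed auto
qed




lemma claim4:
  assumes n: "2 \<le> n" and AF: "A \<in> Fr n ff"
  shows "\<exists>c\<in>conv_ps_rest n. A - c \<in> Sp n ff"
proof (rule bexI[of _ "cc A"])
  let ?M = "multi_idx n"
  have Ac: "A \<in> conv_ps n" using AF unfolding Fr_def by auto
  obtain r0 where r0: "r0 > 0" "psr n A r0" using conv_ps_psr[OF Ac] by blast
  have Asupp: "\<forall>\<alpha>. \<alpha> \<notin> ?M \<longrightarrow> A \<alpha> = 0" using Ac unfolding conv_ps_iff by blast
  show "cc A \<in> conv_ps_rest n"
    unfolding conv_ps_rest_def conv_ps_iff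
  proof (intro CollectI conjI allI impI exI[of _ r0])
    fix \<alpha> assume "\<alpha> \<notin> ?M" thus "cc A \<alpha> = 0" using Asupp unfolding cc_def by simp
  next
    show "r0 > 0" by fact
    show "psr n (cc A) r0" unfolding psr_def
      by (rule summable_on_comparison_test[OF r0(2)[unfolded psr_def]]) (use r0 in \<open>auto simp: cc_def\<close>)
  next
    fix \<alpha> assume "cc A \<alpha> \<noteq> 0" thus "\<alpha> 0 = 0" "\<alpha> 1 = 0" "\<alpha> 2 = 0" unfolding cc_def by (auto split: if_splits)
  qed
  define Amc where "Amc = A - cc A"
  have Amc_app: "Amc \<alpha> = A \<alpha> - cc A \<alpha>" for \<alpha> unfolding Amc_def by simp
  have pAmc: "psr n Amc r0" unfolding psr_def
    by (rule summable_on_comparison_test[OF r0(2)[unfolded psr_def]]) (use r0 in \<open>auto simp: cc_def Amc_app\<close>)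
  have Amcc: "Amc \<in> conv_ps n" unfolding conv_ps_iff using pAmc r0 Asupp by (auto simp: Amc_app cc_def)
  have DxE: "Dx Amc = Dx A" unfolding Dx_def by (auto simp: fun_eq_iff Amc_app cc_def)
  obtain \<epsilon>1 where e1: "\<epsilon>1 > 0" and H1: "\<forall>z. (\<forall>i\<le>n. norm (z i) < \<epsilon>1) \<longrightarrow> z 2 = z 0 * z 1 \<longrightarrow> z 1 \<noteq> 0 \<longrightarrow> ps_eval n (Dx A) z = 0"
    using Fr_D[OF AF r0(2) r0(1)] by blast
  have AmcF: "Amc \<in> Fr n ff" by (rule Fr_crit[OF Amcc pAmc r0(1) e1]) (use H1 in \<open>simp add: DxE\<close>)
  define rb where "rb = (min r0 1)^2 / 8"
  have rb: "rb > 0" unfolding rb_def using r0 by simp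
  have pbb: "psr n (bb n A) rb" unfolding rb_def by (rule bb_psr[OF n r0(2,1)])
  have bbc: "bb n A \<in> conv_ps n" unfolding conv_ps_iff using pbb rb by (auto simp: bb_def)
  have FR: "\<forall>\<beta>\<in>?M. lev (Dx A) \<beta> = 0" by (rule FRC[OF n AF])
  have pDbb: "psr n (Dx (bb n A)) (rb/2)" by (rule psr_Dx[OF pbb rb])
  have SpD: "((\<lambda>t. ps_eval n (bb n A) (z(0 := t)) / (z 2 - t * z 1)) has_field_derivative (ps_eval n Amc z / ff z)) (at (z 0))"
    if pd: "polydisc n (rb/2) z" and fz: "ff z \<noteq> 0" for z
  proof -
    have zc: "\<forall>i\<le>n. norm (z i) < rb/2" using pd unfolding polydisc_def by auto
    have zle: "\<forall>i\<le>n. norm (z i) \<le> rb/2" using zc by (auto simp: less_imp_le)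
    have zle2: "\<forall>i\<le>n. norm (z i) \<le> rb"
    proof (intro allI impI)
      fix i assume "i \<le> n" hence "norm (z i) < rb/2" using zc by blast
      thus "norm (z i) \<le> rb" using rb by linarith
    qed
    define B where "B = ps_eval n (bb n A) z"
    define B' where "B' = ps_eval n (Dx (bb n A)) z"
    define u where "u = z 2 - z 0 * z 1"
    have unz: "u \<noteq> 0" using fz unfolding ff_def u_def by simp
    have dB: "((\<lambda>t. ps_eval n (bb n A) (z(0 := t))) has_field_derivative B') (at (z 0))"
      unfolding B'_def by (rule DL[OF pbb rb zc])
    have du: "((\<lambda>t. z 2 - t * z 1) has_field_derivative (- z 1)) (at (z 0))"
    proof -
      have "((\<lambda>t. z 2 - t * z 1) has_field_derivative (0 - 1 * z 1)) (at (z 0))"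
        by (intro DERIV_diff DERIV_const DERIV_cmult_right DERIV_ident)
      thus ?thesis by simp
    qed
    have D: "((\<lambda>t. ps_eval n (bb n A) (z(0 := t)) / (z 2 - t * z 1)) has_field_derivative
        ((B' * (z 2 - z 0 * z 1) - ps_eval n (bb n A) (z(0 := z 0)) * (- z 1)) / ((z 2 - z 0 * z 1) * (z 2 - z 0 * z 1)))) (at (z 0))"
      by (rule DERIV_divide[OF dB du]) (use unz in \<open>simp add: u_def\<close>)
    have hB: "((\<lambda>\<alpha>. bb n A \<alpha> * monomial_val n \<alpha> z) has_sum B) ?M" unfolding B_def by (rule psr_has_sum[OF pbb zle2])
    have hB': "((\<lambda>\<alpha>. Dx (bb n A) \<alpha> * monomial_val n \<alpha> z) has_sum B') ?M" unfolding B'_def by (rule psr_has_sum[OF pDbb zle])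
    have h1: "((\<lambda>\<alpha>. mulvar 2 (Dx (bb n A)) \<alpha> * monomial_val n \<alpha> z) has_sum (z 2 * B')) ?M"
      by (rule mulvar_hs[OF n hB'])
    have h2: "((\<lambda>\<alpha>. mulvar 0 (mulvar 1 (Dx (bb n A))) \<alpha> * monomial_val n \<alpha> z) has_sum (z 0 * (z 1 * B'))) ?M"
      by (rule mulvar_hs[OF _ mulvar_hs[OF _ hB']]) (use n in auto)
    have h3: "((\<lambda>\<alpha>. mulvar 1 (bb n A) \<alpha> * monomial_val n \<alpha> z) has_sum (z 1 * B)) ?M"
      by (rule mulvar_hs[OF _ hB]) (use n in auto)
    have hL: "((\<lambda>\<alpha>. Lc (bb n A) \<alpha> * monomial_val n \<alpha> z) has_sum (z 2 * B' - z 0 * (z 1 * B') + z 1 * B)) ?M"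
    proof -
      have eqf: "(\<lambda>\<alpha>. Lc (bb n A) \<alpha> * monomial_val n \<alpha> z) = (\<lambda>\<alpha>. (mulvar 2 (Dx (bb n A)) \<alpha> * monomial_val n \<alpha> z
          - mulvar 0 (mulvar 1 (Dx (bb n A))) \<alpha> * monomial_val n \<alpha> z) + mulvar 1 (bb n A) \<alpha> * monomial_val n \<alpha> z)"
        by (rule ext) (simp only: Lc_mulvar distrib_right left_diff_distrib)
      show ?thesis unfolding eqf by (rule has_sum_add[OF has_sum_diff'[OF h1 h2] h3])
    qed
    have "ps_eval n Amc z = ps_eval n (Lc (bb n A)) z"
      unfolding ps_eval_def
    proof (rule infsum_cong)
      fix \<alpha> assume "\<alpha> \<in> ?M"
      hence "Amc \<alpha> = Lc (bb n A) \<alpha>" unfolding Amc_app using coeff_id[OF n _ FR] by simp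
      thus "Amc \<alpha> * monomial_val n \<alpha> z = Lc (bb n A) \<alpha> * monomial_val n \<alpha> z" by simp
    qed
    also have "\<dots> = z 2 * B' - z 0 * (z 1 * B') + z 1 * B" unfolding ps_eval_def by (rule infsumI[OF hL])
    finally have pe: "ps_eval n Amc z = B' * u + B * z 1" unfolding u_def by (simp add: algebra_simps)
    have ffu: "ff z = u * u" unfolding ff_def u_def by (simp add: power2_eq_square)
    have "(B' * (z 2 - z 0 * z 1) - ps_eval n (bb n A) (z(0 := z 0)) * (- z 1)) / ((z 2 - z 0 * z 1) * (z 2 - z 0 * z 1))
        = ps_eval n Amc z / ff z"
    proof -
      have "ps_eval n (bb n A) (z(0 := z 0)) = B" unfolding B_def by simp
      thus ?thesis unfolding pe ffu u_def[symmetric] by (simp add: algebra_simps)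
    qed
    with D show ?thesis by simp
  qed
  show "A - cc A \<in> Sp n ff"
    unfolding Sp_def Amc_def[symmetric]
  proof (intro CollectI conjI bexI[of _ "bb n A"] exI[of _ "rb/2"] allI impI)
    show "Amc \<in> Fr n ff" by fact
    show "bb n A \<in> conv_ps n" by fact
    show "rb/2 > 0" using rb by simp
    fix z assume "polydisc n (rb / 2) z" "ff z \<noteq> 0"
    thus "((\<lambda>t. ps_eval n (bb n A) (z(0 := t)) / (z 2 - t * z 1)) has_field_derivative (ps_eval n Amc z / ff z)) (at (z 0))"
      by (rule SpD)
  qed
qed

lemma one_ps_rest: "one_ps \<in> conv_ps_rest n"
  unfolding conv_ps_rest_def conv_ps_iff
proof (intro CollectI conjI allI impI exI[of _ "1::real"])
  show "\<alpha> \<notin> multi_idx n \<Longrightarrow> one_ps \<alpha> = 0" for \<alpha>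
  proof -
    assume "\<alpha> \<notin> multi_idx n"
    hence "\<alpha> \<noteq> (\<lambda>_. 0)" unfolding multi_idx_def by auto
    thus ?thesis unfolding one_ps_def by simp
  qed
  show "(1::real) > 0" by simp
  have hs0: "((\<lambda>\<alpha>. norm (one_ps \<alpha>) * 1 ^ dg n \<alpha>) has_sum (\<Sum>\<alpha>\<in>{\<lambda>_. 0::nat}. norm (one_ps \<alpha>) * 1 ^ dg n \<alpha>)) {\<lambda>_. 0}"
    by (rule has_sum_finite) simp
  have "(\<Sum>\<alpha>\<in>{\<lambda>_. 0::nat}. norm (one_ps \<alpha>) * 1 ^ dg n \<alpha>) = 1" by (simp add: one_ps_def)
  with hs0 have "((\<lambda>\<alpha>. norm (one_ps \<alpha>) * 1 ^ dg n \<alpha>) has_sum 1) {\<lambda>_. 0}" by simp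
  hence "((\<lambda>\<alpha>. norm (one_ps \<alpha>) * 1 ^ dg n \<alpha>) has_sum 1) (multi_idx n)"
  proof (subst (asm) has_sum_cong_neutral[where T="multi_idx n" and g="\<lambda>\<alpha>. norm (one_ps \<alpha>) * 1 ^ dg n \<alpha>"])
    show "\<And>x. x \<in> multi_idx n - {\<lambda>_. 0} \<Longrightarrow> norm (one_ps x) * 1 ^ dg n x = 0"
      unfolding one_ps_def by simp
    show "\<And>x. x \<in> {\<lambda>_. 0} - multi_idx n \<Longrightarrow> norm (one_ps x) * 1 ^ dg n x = 0"
      unfolding multi_idx_def by simp
  qed auto
  thus "psr n one_ps 1" unfolding psr_def by (rule has_sum_imp_summable)
  fix \<alpha> assume "one_ps \<alpha> \<noteq> 0"
  hence "\<alpha> = (\<lambda>_. 0)" unfolding one_ps_def by (auto split: if_splits)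
  thus "\<alpha> 0 = 0" "\<alpha> 1 = 0" "\<alpha> 2 = 0" by auto
qed

theorem mainTheorem17:
  fixes n :: nat and f :: "(nat \<Rightarrow> complex) \<Rightarrow> complex"
  assumes "n \<ge> 2"
    and "\<And>z. f z = (z 2 - z 0 * z 1) ^ 2"
  shows "one_ps \<in> Fr n f
    \<and> (\<forall>c\<in>conv_ps_rest n. c \<in> Fr n f)
    \<and> (\<forall>c\<in>conv_ps_rest n. \<forall>d\<in>conv_ps_rest n. c - d \<in> Sp n f \<longrightarrow> c = d)
    \<and> (\<forall>A\<in>Fr n f. \<exists>c\<in>conv_ps_rest n. A - c \<in> Sp n f)"
proof -
  have fe: "f = ff" by (rule ext) (simp add: assms(2) ff_def)
  show ?thesis unfolding fe
  proof (intro conjI ballI impI)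
    show "one_ps \<in> Fr n ff" by (rule claim2[OF one_ps_rest])
  next
    fix c assume "c \<in> conv_ps_rest n" thus "c \<in> Fr n ff" by (rule claim2)
  next
    fix c d assume "c \<in> conv_ps_rest n" "d \<in> conv_ps_rest n" "c - d \<in> Sp n ff"
    thus "c = d" by (rule claim3)
  next
    fix A assume "A \<in> Fr n ff" thus "\<exists>c\<in>conv_ps_rest n. A - c \<in> Sp n ff" by (rule claim4[OF assms(1)])
  qed
qed


end
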